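(* Let $\Lambda$ be an irreducible root lattice of dimension $n$, i.e. $\Lambda$ is isometric to one of $\mathbb A_n$ ($n\ge1$), $\mathbb D_n$ ($n\ge4$), $\mathbb E_6,\mathbb E_7,\mathbb E_8$. Let $x_0$ be any vector of norm $2$ in $\Lambda$ and let $\mathcal E$ be the set of vectors $y\in\Lambda$ of norm $6$ with $y-x_0\in2\Lambda$. Then the linear span of $\mathcal E$ has dimension $r=n-1$, and the number $t$ of lines $\mathbb Ry$, $y\in\mathcal E$ (which form an equiangular family with angle $\arccos\frac13$), is: $t=r$ if $\Lambda=\mathbb A_n$; $t=2r-2$ if $\Lambda=\mathbb D_n$; $t=28$ if $\Lambda=\mathbb E_8$; $t=16$ if $\Lambda=\mathbb E_7$; $t=10$ if $\Lambda=\mathbb E_6$.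
   Context: With $(\varepsilon_i)$ the canonical basis: $\mathbb A_n=\{x\in\mathbb Z^{n+1}:\sum_{i=0}^n x_i=0\}$; $\mathbb D_n=\{x\in\mathbb Z^n:\sum_{i=1}^n x_i\equiv0\pmod 2\}$; $\mathbb E_8=\mathbb D_8\cup(\mathbb D_8+e)$ with $e=\frac12(\varepsilon_1+\dots+\varepsilon_8)$; $\mathbb E_7=\{x\in\mathbb E_8: x\cdot(\varepsilon_7-\varepsilon_8)=0\}$ and $\mathbb E_6=\{x\in\mathbb E_7:x\cdot(\varepsilon_6-\varepsilon_7)=0\}$. Each is regarded as a lattice in its real span; the dimension $n$ of $\mathbb A_n$ is $n$. Norm means $N(x)=x\cdot x$; these lattices are even with minimum $2$. *)

theory Defs
  imports "HOL-Analysis.Analysis" "HOL-Library.Numeral_Type"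
begin

text \<open>Vectors of R^m are modelled as real^'m for a finite index type 'm.
  The coordinates epsilon_1..epsilon_8 of R^8 correspond to the indices 0..7 of type 8.\<close>

definition int_vec :: "real^'m \<Rightarrow> bool" where
  "int_vec x \<longleftrightarrow> (\<forall>i. x $ i \<in> \<int>)"

text \<open>A_n inside R^(n+1), where n+1 = CARD('m).\<close>
definition A_lat :: "(real^'m) set" where
  "A_lat = {x. int_vec x \<and> (\<Sum>i\<in>UNIV. x $ i) = 0}"

text \<open>D_n inside R^n, where n = CARD('m).\<close>
definition D_lat :: "(real^'m) set" where
  "D_lat = {x. int_vec x \<and> (\<exists>k\<in>\<int>. (\<Sum>i\<in>UNIV. x $ i) = 2 * k)}"

definition e_half :: "real^8" where
  "e_half = (\<chi> i. 1/2)"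

definition E8_lat :: "(real^8) set" where
  "E8_lat = D_lat \<union> {x + e_half | x. x \<in> D_lat}"

definition E7_lat :: "(real^8) set" where
  "E7_lat = {x \<in> E8_lat. x \<bullet> (axis 6 1 - axis 7 1) = 0}"

definition E6_lat :: "(real^8) set" where
  "E6_lat = {x \<in> E7_lat. x \<bullet> (axis 5 1 - axis 6 1) = 0}"

definition Nrm :: "real^'m \<Rightarrow> real" where
  "Nrm x = x \<bullet> x"

definition Eset :: "(real^'m) set \<Rightarrow> real^'m \<Rightarrow> (real^'m) set" where
  "Eset L x0 = {y \<in> L. Nrm y = 6 \<and> y - x0 \<in> (\<lambda>z. 2 *\<^sub>R z) ` L}"

definition lines_of :: "(real^'m) set \<Rightarrow> (real^'m) set set" where
  "lines_of E = (\<lambda>y. span {y}) ` E"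

definition prop_holds :: "(real^'m) set \<Rightarrow> nat \<Rightarrow> nat \<Rightarrow> bool" where
  "prop_holds L r t \<longleftrightarrow>
     (\<forall>x0\<in>L. Nrm x0 = 2 \<longrightarrow>
        dim (span (Eset L x0)) = r \<and>
        card (lines_of (Eset L x0)) = t \<and>
        (\<forall>y\<in>Eset L x0. \<forall>y'\<in>Eset L x0. span {y} \<noteq> span {y'} \<longrightarrow>
            \<bar>y \<bullet> y'\<bar> = (1/3) * (norm y * norm y')))"

end

theory Submission
  imports Defs
begin

definition evenlat :: "(real^'m) set \<Rightarrow> bool" where
  "evenlat L \<longleftrightarrow> 0 \<in> L \<and> (\<forall>x\<in>L. \<forall>y\<in>L. x + y \<in> L) \<and> (\<forall>x\<in>L. -x \<in> L)
     \<and> (\<forall>x\<in>L. \<forall>y\<in>L. x \<bullet> y \<in> \<int>) \<and> (\<forall>x\<in>L. x \<bullet> x / 2 \<in> \<int>)"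

definition Rset :: "(real^'m) set \<Rightarrow> real^'m \<Rightarrow> (real^'m) set" where
  "Rset L x0 = {z\<in>L. z \<bullet> z = 2 \<and> z \<bullet> x0 = -1}"

lemma evenlat_add: "evenlat L \<Longrightarrow> x \<in> L \<Longrightarrow> y \<in> L \<Longrightarrow> x + y \<in> L"
  by (simp add: evenlat_def)
lemma evenlat_neg: "evenlat L \<Longrightarrow> x \<in> L \<Longrightarrow> -x \<in> L"
  by (simp add: evenlat_def)
lemma evenlat_diff: "evenlat L \<Longrightarrow> x \<in> L \<Longrightarrow> y \<in> L \<Longrightarrow> x - y \<in> L"
  using evenlat_add[of L x "-y"] evenlat_neg[of L y] by simp
lemma evenlat_zero: "evenlat L \<Longrightarrow> 0 \<in> L"
  by (simp add: evenlat_def)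
lemma evenlat_inner: "evenlat L \<Longrightarrow> x \<in> L \<Longrightarrow> y \<in> L \<Longrightarrow> x \<bullet> y \<in> \<int>"
  by (simp add: evenlat_def)
lemma evenlat_norm: "evenlat L \<Longrightarrow> x \<in> L \<Longrightarrow> x \<bullet> x / 2 \<in> \<int>"
  by (simp add: evenlat_def)

lemma evenlat_nat_scale: "evenlat L \<Longrightarrow> x \<in> L \<Longrightarrow> of_nat n *\<^sub>R x \<in> L"
proof (induct n)
  case 0 then show ?case by (simp add: evenlat_zero)
next
  case (Suc n)
  then have "of_nat n *\<^sub>R x + x \<in> L" by (simp add: evenlat_add)
  then show ?case by (simp add: algebra_simps)
qed

lemma evenlat_int_scale: "evenlat L \<Longrightarrow> x \<in> L \<Longrightarrow> c \<in> \<int> \<Longrightarrow> c *\<^sub>R x \<in> L"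
proof -
  assume L: "evenlat L" and x: "x \<in> L" and c: "c \<in> \<int>"
  then obtain m where m: "c = of_int m" by (auto elim: Ints_cases)
  show ?thesis
  proof (cases "m \<ge> 0")
    case True
    then have "c = of_nat (nat m)" using m by simp
    then show ?thesis using evenlat_nat_scale[OF L x] by simp
  next
    case False
    then have "c = - of_nat (nat (-m))" using m by simp
    then show ?thesis using evenlat_neg[OF L evenlat_nat_scale[OF L x, of "nat (-m)"]] by simp
  qed
qed

lemma int_sq_le3: "(w::int)^2 \<le> 3 \<Longrightarrow> w \<in> {-1,0,1}"
proof (rule ccontr)
  assume a: "w^2 \<le> 3" "w \<notin> {-1,0,1}"
  then have "\<bar>w\<bar> \<ge> 2" by auto
  then have "\<bar>w\<bar> * \<bar>w\<bar> \<ge> 2 * 2" by (meson mult_mono order_trans zero_le_numeral dual_order.trans abs_ge_zero)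
  then show False using a(1) by (simp add: power2_eq_square abs_mult[symmetric])
qed

lemma int_sq_le4: "(w::int)^2 \<le> 4 \<Longrightarrow> w \<in> {-2,-1,0,1,2}"
proof (rule ccontr)
  assume a: "w^2 \<le> 4" "w \<notin> {-2,-1,0,1,2}"
  then have "\<bar>w\<bar> \<ge> 3" by auto
  then have "\<bar>w\<bar> * \<bar>w\<bar> \<ge> 3 * 3" by (meson mult_mono order_trans zero_le_numeral dual_order.trans abs_ge_zero)
  then show False using a(1) by (simp add: power2_eq_square abs_mult[symmetric])
qed

lemma Eset_eq:
  assumes L: "evenlat L" and x0: "x0 \<in> L" "x0 \<bullet> x0 = 2"
  shows "Eset L x0 = (\<lambda>z. x0 + 2 *\<^sub>R z) ` Rset L x0"
proof
  show "Eset L x0 \<subseteq> (\<lambda>z. x0 + 2 *\<^sub>R z) ` Rset L x0"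
  proof
    fix y assume "y \<in> Eset L x0"
    then obtain z where y: "y \<in> L" "y \<bullet> y = 6" and z: "z \<in> L" "y - x0 = 2 *\<^sub>R z"
      by (auto simp: Eset_def Nrm_def)
    have yz: "y = x0 + 2 *\<^sub>R z" using z by (simp add: algebra_simps)
    have "y \<bullet> y = x0 \<bullet> x0 + 4 * (z \<bullet> x0) + 4 * (z \<bullet> z)"
      unfolding yz by (simp add: algebra_simps inner_commute)
    then have e1: "z \<bullet> x0 + z \<bullet> z = 1" using y x0 by simp
    obtain m where m: "z \<bullet> z / 2 = of_int m" using evenlat_norm[OF L z(1)] by (auto elim: Ints_cases)
    have cs: "(z \<bullet> x0)^2 \<le> (z \<bullet> z) * (x0 \<bullet> x0)" by (rule Cauchy_Schwarz_ineq)
    have zx: "z \<bullet> x0 = 1 - 2 * of_int m" "z \<bullet> z = 2 * of_int m" using e1 m by linarith+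
    have "(1 - 2 * of_int m)^2 \<le> (2 * of_int m) * (2::real)"
      using cs x0 unfolding zx by simp
    then have "of_int ((2*m - 2)^2) \<le> (of_int 3 :: real)"
      by (simp add: power2_eq_square algebra_simps)
    then have "(2*m-2)^2 \<le> 3" by linarith
    then have "2*m - 2 \<in> {-1,0,1}" by (rule int_sq_le3)
    then have "m = 1" by auto
    then have "z \<bullet> z = 2" "z \<bullet> x0 = -1" using m e1 by auto
    then show "y \<in> (\<lambda>z. x0 + 2 *\<^sub>R z) ` Rset L x0" using z yz by (auto simp: Rset_def)
  qed
next
  show "(\<lambda>z. x0 + 2 *\<^sub>R z) ` Rset L x0 \<subseteq> Eset L x0"
  proof
    fix y assume "y \<in> (\<lambda>z. x0 + 2 *\<^sub>R z) ` Rset L x0"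
    then obtain z where z: "z \<in> L" "z \<bullet> z = 2" "z \<bullet> x0 = -1" and yz: "y = x0 + 2 *\<^sub>R z"
      by (auto simp: Rset_def)
    have "2 *\<^sub>R z = z + z" by (simp add: scaleR_2)
    then have "y \<in> L" using yz evenlat_add[OF L] z x0 by metis
    moreover have "y \<bullet> y = x0 \<bullet> x0 + 4 * (z \<bullet> x0) + 4 * (z \<bullet> z)"
      unfolding yz by (simp add: algebra_simps inner_commute)
    moreover have "y - x0 = 2 *\<^sub>R z" using yz by simp
    ultimately show "y \<in> Eset L x0" using z x0 by (auto simp: Eset_def Nrm_def)
  qed
qed

lemma inner_self_zero: "(x::real^'m) \<bullet> x = 0 \<Longrightarrow> x = 0" by simp

lemma span_neg_sing: "span {- (y::real^'m)} = span {y}"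
  proof -
  have "y \<in> span {-y}" by (metis span_neg span_base insertI1 minus_minus)
  then show ?thesis by (simp add: span_eq span_base span_neg)
qed

lemma angle_prop:
  assumes L: "evenlat L" and x0: "x0 \<in> L" "x0 \<bullet> x0 = 2"
  shows "\<forall>y\<in>Eset L x0. \<forall>y'\<in>Eset L x0. span {y} \<noteq> span {y'} \<longrightarrow>
            \<bar>y \<bullet> y'\<bar> = (1/3) * (norm y * norm y')"
proof (intro ballI impI)
  fix y y' assume yE: "y \<in> Eset L x0" and y'E: "y' \<in> Eset L x0" and ne: "span {y} \<noteq> span {y'}"
  obtain z where z: "z \<in> L" "z \<bullet> z = 2" "z \<bullet> x0 = -1" and yz: "y = x0 + 2 *\<^sub>R z"
    using yE unfolding Eset_eq[OF L x0] by (auto simp: Rset_def)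
  obtain z' where z': "z' \<in> L" "z' \<bullet> z' = 2" "z' \<bullet> x0 = -1" and yz': "y' = x0 + 2 *\<^sub>R z'"
    using y'E unfolding Eset_eq[OF L x0] by (auto simp: Rset_def)
  have nn: "y \<bullet> y = 6" "y' \<bullet> y' = 6"
    unfolding yz yz' using x0 z z' by (simp_all add: algebra_simps inner_commute)
  have n6: "norm y * norm y' = 6"
    using nn by (simp add: norm_eq_sqrt_inner real_sqrt_mult[symmetric])
  define c where "c = z \<bullet> z'"
  have yy: "y \<bullet> y' = 4 * c - 2"
    unfolding yz yz' c_def using x0 z z' by (simp add: algebra_simps inner_commute)
  obtain k where k: "c = of_int k" using evenlat_inner[OF L z(1) z'(1)] c_def by (auto elim: Ints_cases)
  have "c^2 \<le> 4" using Cauchy_Schwarz_ineq[of z z'] z z' c_def by simp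
  then have "of_int (k^2) \<le> (of_int 4::real)" using k by simp
  then have "k^2 \<le> 4" by linarith
  then have kk: "k \<in> {-2,-1,0,1,2}" by (rule int_sq_le4)
  have k2: "k \<noteq> 2"
  proof
    assume "k = 2"
    then have "(z - z') \<bullet> (z - z') = 0" using k z z' c_def by (simp add: algebra_simps inner_commute)
    then have "z = z'" by simp
    then show False using ne yz yz' by simp
  qed
  have km2: "k \<noteq> -2"
  proof
    assume "k = -2"
    then have "(z + z') \<bullet> (z + z') = 0" using k z z' c_def by (simp add: algebra_simps inner_commute)
    then have "z' = -z" by (simp add: add_eq_0_iff)
    then show False using z z' by simp
  qed
  have km1: "k \<noteq> -1"
  proof
    assume "k = -1"
    then have "(z + z' + x0) \<bullet> (z + z' + x0) = 0" using k z z' x0 c_def by (simp add: algebra_simps inner_commute)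
    then have zz0: "z + z' + x0 = 0" by (rule inner_self_zero)
    have "y' + y = 2 *\<^sub>R (z + z' + x0)" unfolding yz yz' by (simp add: algebra_simps scaleR_2)
    then have "y' = - y" using zz0 by (simp add: eq_neg_iff_add_eq_0)
    then have "span {y} = span {y'}" by (simp add: span_neg_sing)
    then show False using ne by simp
  qed
  have "k = 0 \<or> k = 1" using kk k2 km1 km2 by auto
  then have "\<bar>y \<bullet> y'\<bar> = 2" using yy k by auto
  then show "\<bar>y \<bullet> y'\<bar> = (1/3) * (norm y * norm y')" using n6 by simp
qed

lemma span_sing_eq_pm:
  assumes "span {y} = span {y'}" "(y::real^'m) \<bullet> y = a" "y' \<bullet> y' = a" "a \<noteq> 0"
  shows "y' = y \<or> y' = - y"
proof -
  have "y' \<in> span {y}" using assms(1) by (simp add: span_base)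
  then obtain c where c: "y' = c *\<^sub>R y" by (auto simp: span_singleton)
  then have "c * c * a = a" using assms by (simp add: algebra_simps)
  then have "c * c = 1" using assms(4) by simp
  then have "c = 1 \<or> c = -1" by (metis mult_cancel_left1 square_eq_1_iff)
  then show ?thesis using c by auto
qed

lemma card_lines:
  assumes "P \<subseteq> E" "E \<subseteq> P \<union> uminus ` P" "finite P"
    and "\<forall>y\<in>P. (y::real^'m) \<bullet> y = a" "a \<noteq> 0"
    and "\<forall>y\<in>P. \<forall>y'\<in>P. y' \<noteq> - y"
  shows "card (lines_of E) = card P"
proof -
  have "lines_of E = (\<lambda>y. span {y}) ` P"
  proof
    show "lines_of E \<subseteq> (\<lambda>y. span {y}) ` P"
    proof
      fix l assume "l \<in> lines_of E"
      then obtain y where y: "y \<in> E" "l = span {y}" by (auto simp: lines_of_def)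
      then have "y \<in> P \<or> -y \<in> P" using assms(2) by force
      then show "l \<in> (\<lambda>y. span {y}) ` P"
      proof
        assume "y \<in> P" then show ?thesis using y by blast
      next
        assume "-y \<in> P" then show ?thesis using y span_neg_sing[of y] by (metis image_eqI)
      qed
    qed
    show "(\<lambda>y. span {y}) ` P \<subseteq> lines_of E" using assms(1) by (auto simp: lines_of_def)
  qed
  moreover have "inj_on (\<lambda>y. span {y}) P"
  proof (rule inj_onI)
    fix y y' assume "y \<in> P" "y' \<in> P" "span {y} = span {y'}"
    then show "y = y'" using span_sing_eq_pm[of y y' a] assms(4-6) by auto
  qed
  ultimately show ?thesis by (simp add: card_image)
qed

definition refl :: "real^'m \<Rightarrow> real^'m \<Rightarrow> real^'m" where
  "refl r x = x - (x \<bullet> r) *\<^sub>R r"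

lemma refl_linear: "linear (refl r)"
  by (rule linearI) (simp_all add: refl_def algebra_simps inner_add_left)

lemma refl_inner: "r \<bullet> r = 2 \<Longrightarrow> refl r x \<bullet> refl r y = x \<bullet> y"
  by (simp add: refl_def algebra_simps inner_commute)

lemma refl_invol: "r \<bullet> r = 2 \<Longrightarrow> refl r (refl r x) = x"
  by (simp add: refl_def algebra_simps inner_commute)

lemma refl_mem: "evenlat L \<Longrightarrow> r \<in> L \<Longrightarrow> x \<in> L \<Longrightarrow> refl r x \<in> L"
  unfolding refl_def by (intro evenlat_diff evenlat_int_scale evenlat_inner) auto

lemma refl_diff: "refl r x - refl r y = refl r (x - y)"
  by (simp add: refl_def algebra_simps inner_diff_left)

lemma refl_scale: "refl r (c *\<^sub>R x) = c *\<^sub>R refl r x"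
  by (simp add: refl_def algebra_simps)

lemma Eset_refl_sub:
  assumes L: "evenlat L" and r: "r \<in> L" "r \<bullet> r = 2"
  shows "refl r ` Eset L x0 \<subseteq> Eset L (refl r x0)"
proof
  fix y' assume "y' \<in> refl r ` Eset L x0"
  then obtain y z where y: "y \<in> L" "Nrm y = 6" "z \<in> L" "y - x0 = 2 *\<^sub>R z" and y': "y' = refl r y"
    by (auto simp: Eset_def)
  have "refl r y - refl r x0 = 2 *\<^sub>R refl r z" using y by (simp add: refl_diff refl_scale)
  moreover have "refl r z \<in> L" "refl r y \<in> L" using refl_mem[OF L r(1)] y by auto
  moreover have "Nrm (refl r y) = 6" using y refl_inner[OF r(2)] by (simp add: Nrm_def)
  ultimately show "y' \<in> Eset L (refl r x0)" unfolding y' Eset_def by auto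
qed

lemma Eset_refl:
  assumes L: "evenlat L" and r: "r \<in> L" "r \<bullet> r = 2"
  shows "Eset L (refl r x0) = refl r ` Eset L x0"
proof
  show "refl r ` Eset L x0 \<subseteq> Eset L (refl r x0)" by (rule Eset_refl_sub[OF assms])
  have "refl r ` Eset L (refl r x0) \<subseteq> Eset L x0"
    using Eset_refl_sub[OF assms, of "refl r x0"] refl_invol[OF r(2)] by simp
  then have "refl r ` refl r ` Eset L (refl r x0) \<subseteq> refl r ` Eset L x0" by blast
  then show "Eset L (refl r x0) \<subseteq> refl r ` Eset L x0"
    using refl_invol[OF r(2)] by (simp add: image_image)
qed

lemma refl_inj: "r \<bullet> r = 2 \<Longrightarrow> inj (refl r)"
  by (metis injI refl_invol)

lemma dim_span_refl:
  assumes r: "r \<bullet> r = 2"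
  shows "dim (span (refl r ` S)) = dim (span S)"
proof -
  have a: "dim (refl r ` S) \<le> dim S" for S by (rule dim_image_le[OF refl_linear])
  have "dim S = dim (refl r ` refl r ` S)" using refl_invol[OF r] by (simp add: image_image)
  then have "dim S \<le> dim (refl r ` S)" using a[of "refl r ` S"] by simp
  then show ?thesis using a[of S] by (simp add: dim_span)
qed

lemma lines_refl:
  assumes r: "r \<bullet> r = 2"
  shows "card (lines_of (refl r ` E)) = card (lines_of E)"
proof -
  have "lines_of (refl r ` E) = (\<lambda>l. refl r ` l) ` lines_of E"
    unfolding lines_of_def image_image
    by (rule image_cong) (auto simp: linear_span_image[OF refl_linear, symmetric])
  moreover have "inj (\<lambda>l. refl r ` l)"
    using refl_inj[OF r] by (simp add: inj_def inj_image_eq_iff)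
  ultimately show ?thesis by (simp add: card_image inj_on_subset)
qed

definition Qp :: "(real^'m) set \<Rightarrow> nat \<Rightarrow> nat \<Rightarrow> real^'m \<Rightarrow> bool" where
  "Qp L d t x0 \<longleftrightarrow> dim (span (Eset L x0)) = d \<and> card (lines_of (Eset L x0)) = t"

lemma Qp_refl:
  assumes L: "evenlat L" and r: "r \<in> L" "r \<bullet> r = 2" and Q: "Qp L d t x0"
  shows "Qp L d t (refl r x0)"
  using Q unfolding Qp_def Eset_refl[OF assms(1-3)] dim_span_refl[OF r(2)] lines_refl[OF r(2)] .

lemma Qp_adj1:
  assumes L: "evenlat L" and u: "u \<in> L" "u \<bullet> u = 2" and v: "v \<in> L" "v \<bullet> v = 2"
    and uv: "u \<bullet> v = 1" and Q: "Qp L d t u"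
  shows "Qp L d t v"
proof -
  have r: "u - v \<in> L" "(u - v) \<bullet> (u - v) = 2"
    using evenlat_diff[OF L u(1) v(1)] u v uv by (auto simp: algebra_simps inner_commute)
  have "refl (u - v) u = v" using u uv by (simp add: refl_def algebra_simps inner_commute)
  then show ?thesis using Qp_refl[OF L r Q] by simp
qed

lemma Qp_neg:
  assumes L: "evenlat L" and u: "u \<in> L" "u \<bullet> u = 2" and Q: "Qp L d t u"
  shows "Qp L d t (-u)"
proof -
  have "refl u u = u - 2 *\<^sub>R u" using u by (simp add: refl_def)
  also have "\<dots> = -u" by (simp add: scaleR_2)
  finally have "refl u u = -u" .
  then show ?thesis using Qp_refl[OF L u Q] by simp
qed

lemma Qp_adj:
  assumes L: "evenlat L" and u: "u \<in> L" "u \<bullet> u = 2" and v: "v \<in> L" "v \<bullet> v = 2"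
    and uv: "\<bar>u \<bullet> v\<bar> = 1" and Q: "Qp L d t u"
  shows "Qp L d t v"
proof (cases "u \<bullet> v = 1")
  case True then show ?thesis using Qp_adj1[OF L u v _ Q] by simp
next
  case False
  then have "u \<bullet> (-v) = 1" using uv by auto
  then have "Qp L d t (-v)" using Qp_adj1[OF L u evenlat_neg[OF L v(1)] _ _ Q] v by simp
  then show ?thesis using Qp_neg[OF L evenlat_neg[OF L v(1)]] v by simp
qed

lemma Qp_transfer:
  assumes L: "evenlat L" and b: "b \<in> L" "b \<bullet> b = 2" and Qb: "Qp L d t b"
    and x0: "x0 \<in> L" "x0 \<bullet> x0 = 2"
    and wit: "x0 \<bullet> b = 0 \<Longrightarrow> \<exists>w\<in>L. w \<bullet> w = 2 \<and> \<bar>w \<bullet> x0\<bar> = 1 \<and> \<bar>w \<bullet> b\<bar> = 1"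
  shows "Qp L d t x0"
proof -
  obtain k where k: "x0 \<bullet> b = of_int k" using evenlat_inner[OF L x0(1) b(1)] by (auto elim: Ints_cases)
  have "(x0 \<bullet> b)^2 \<le> 4" using Cauchy_Schwarz_ineq[of x0 b] x0 b by simp
  then have "of_int (k^2) \<le> (of_int 4::real)" using k by simp
  then have "k^2 \<le> 4" by linarith
  then have kk: "k \<in> {-2,-1,0,1,2}" by (rule int_sq_le4)
  show ?thesis
  proof (cases "k = 2")
    case True
    then have "(x0 - b) \<bullet> (x0 - b) = 0" using k x0 b by (simp add: algebra_simps inner_commute)
    then have "x0 = b" by simp
    then show ?thesis using Qb by simp
  next
    case k2: False
    show ?thesis
    proof (cases "k = -2")
      case True
      then have "(x0 + b) \<bullet> (x0 + b) = 0" using k x0 b by (simp add: algebra_simps inner_commute)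
      then have "x0 = -b" by (simp add: add_eq_0_iff)
      then show ?thesis using Qp_neg[OF L b Qb] by simp
    next
      case km2: False
      show ?thesis
      proof (cases "k = 0")
        case True
        then obtain w where w: "w \<in> L" "w \<bullet> w = 2" "\<bar>w \<bullet> x0\<bar> = 1" "\<bar>w \<bullet> b\<bar> = 1"
          using wit k by auto
        have "Qp L d t w" using Qp_adj[OF L b w(1,2) _ Qb] w(4) by (simp add: inner_commute)
        then show ?thesis using Qp_adj[OF L w(1,2) x0 w(3)] by simp
      next
        case False
        then have "\<bar>b \<bullet> x0\<bar> = 1" using kk k2 km2 k by (auto simp: inner_commute)
        then show ?thesis using Qp_adj[OF L b x0 _ Qb] by simp
      qed
    qed
  qed
qed

lemma inner_sum: "(x::real^'m) \<bullet> y = (\<Sum>i\<in>UNIV. x$i * y$i)"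
  by (simp add: inner_vec_def)

lemma int_sq_le2: "(m::int)^2 \<le> 2 \<Longrightarrow> m \<in> {-1,0,1}"
  using int_sq_le3[of m] by simp

lemma int_root:
  assumes iv: "int_vec x" and n: "(x::real^'m) \<bullet> x = 2"
  shows "\<exists>i j s t. i \<noteq> j \<and> (s = 1 \<or> s = -1) \<and> (t = 1 \<or> t = -1) \<and> x = s *\<^sub>R axis i 1 + t *\<^sub>R axis j 1"
proof -
  have ssum: "(\<Sum>i\<in>UNIV. (x$i)^2) = 2" using n by (simp add: inner_sum power2_eq_square)
  have c: "x$i \<in> {-1,0,1}" for i
  proof -
    obtain m where m: "x$i = of_int m" using iv by (auto simp: int_vec_def elim: Ints_cases)
    have "(x$i)^2 \<le> (\<Sum>i\<in>UNIV. (x$i)^2)" by (rule member_le_sum) auto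
    then have "of_int (m^2) \<le> (of_int 2::real)" using ssum m by simp
    then have "m^2 \<le> 2" by linarith
    then show ?thesis using m int_sq_le2[of m] by auto
  qed
  define S where "S = {i. x$i \<noteq> 0}"
  have sq: "(x$i)^2 = (if i \<in> S then 1 else 0)" for i using c[of i] by (auto simp: S_def)
  have "(\<Sum>i\<in>UNIV. (x$i)^2) = (\<Sum>i\<in>UNIV. if i \<in> S then 1 else (0::real))" by (simp add: sq)
  also have "\<dots> = real (card S)" by (simp add: sum.If_cases)
  finally have "card S = 2" using ssum by simp
  then obtain i j where ij: "i \<noteq> j" "S = {i,j}" by (auto simp: card_2_iff)
  have xi: "x$i = 1 \<or> x$i = -1" "x$j = 1 \<or> x$j = -1" using c[of i] c[of j] ij by (auto simp: S_def)
  have "x = (x$i) *\<^sub>R axis i 1 + (x$j) *\<^sub>R axis j 1"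
  proof (subst vec_eq_iff, rule allI)
    fix k show "x$k = ((x$i) *\<^sub>R axis i 1 + (x$j) *\<^sub>R axis j 1)$k"
      using ij by (cases "k = i"; cases "k = j") (auto simp: axis_def S_def)
  qed
  then show ?thesis using ij xi by blast
qed

lemma int_half_pair: "(m::real) \<in> \<int> \<Longrightarrow> m * (m - 1) / 2 \<in> \<int>"
proof -
  assume "m \<in> \<int>"
  then obtain k where k: "m = of_int k" by (auto elim: Ints_cases)
  have "even (k * (k - 1))" by simp
  then obtain l where l: "k * (k - 1) = 2 * l" by (metis evenE)
  have "m * (m - 1) / 2 = of_int (k * (k - 1)) / 2" using k by simp
  also have "\<dots> = of_int l" using l by simp
  finally show ?thesis by simp
qed

lemma int_vec_norm_even:
  assumes iv: "int_vec (x::real^'m)" and s: "(\<Sum>i\<in>UNIV. x$i) / 2 \<in> \<int>"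
  shows "x \<bullet> x / 2 \<in> \<int>"
proof -
  have "x \<bullet> x / 2 = (\<Sum>i\<in>UNIV. x$i * (x$i - 1) / 2) + (\<Sum>i\<in>UNIV. x$i) / 2"
    by (simp add: inner_sum sum_divide_distrib[symmetric] sum.distrib[symmetric] algebra_simps add_divide_distrib[symmetric])
  moreover have "(\<Sum>i\<in>UNIV. x$i * (x$i - 1) / 2) \<in> \<int>"
    using iv by (intro Ints_sum int_half_pair) (auto simp: int_vec_def)
  ultimately show ?thesis using s by (metis Ints_add)
qed

lemma int_vec_add: "int_vec x \<Longrightarrow> int_vec y \<Longrightarrow> int_vec (x + y)"
  by (auto simp: int_vec_def)
lemma int_vec_neg: "int_vec x \<Longrightarrow> int_vec (- x)"
  by (auto simp: int_vec_def)
lemma int_vec_inner: "int_vec x \<Longrightarrow> int_vec y \<Longrightarrow> x \<bullet> y \<in> \<int>"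
  by (auto simp: int_vec_def inner_sum intro!: Ints_sum Ints_mult)
lemma int_vec_zero: "int_vec 0"
  by (auto simp: int_vec_def)

lemma evenlat_A: "evenlat (A_lat :: (real^'m) set)"
  unfolding evenlat_def A_lat_def
  by (auto simp: int_vec_add int_vec_neg int_vec_inner int_vec_zero sum.distrib sum_negf intro!: int_vec_norm_even)

lemma sum_axis: "(\<Sum>i\<in>UNIV. (axis k (c::real) :: real^'m) $ i) = c"
  by (simp add: axis_def)

definition vsum :: "real^'m \<Rightarrow> real" where "vsum x = (\<Sum>i\<in>UNIV. x$i)"

lemma vsum_add[simp]: "vsum (x + y) = vsum x + vsum y" by (simp add: vsum_def sum.distrib)
lemma vsum_diff[simp]: "vsum (x - y) = vsum x - vsum y" by (simp add: vsum_def sum_subtractf)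
lemma vsum_neg[simp]: "vsum (- x) = - vsum x" by (simp add: vsum_def sum_negf)
lemma vsum_scale[simp]: "vsum (c *\<^sub>R x) = c * vsum x" by (simp add: vsum_def sum_distrib_left)
lemma vsum_axis[simp]: "vsum (axis k c) = c" by (simp add: vsum_def axis_def)

lemma A_lat_iff: "x \<in> A_lat \<longleftrightarrow> int_vec x \<and> vsum x = 0" by (simp add: A_lat_def vsum_def)

lemma int_vec_axis: "c \<in> \<int> \<Longrightarrow> int_vec (axis k c)" by (simp add: int_vec_def axis_def)
lemma int_vec_scale: "c \<in> \<int> \<Longrightarrow> int_vec x \<Longrightarrow> int_vec (c *\<^sub>R x)" by (simp add: int_vec_def)
lemma int_vec_diff: "int_vec x \<Longrightarrow> int_vec y \<Longrightarrow> int_vec (x - y)" by (auto simp: int_vec_def)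

lemma A_root:
  assumes "x \<in> A_lat" "(x::real^'m) \<bullet> x = 2"
  shows "\<exists>p q. p \<noteq> q \<and> x = axis p 1 - axis q 1"
proof -
  obtain i j s t where ij: "i \<noteq> j" "s = 1 \<or> s = -1" "t = 1 \<or> t = -1" "x = s *\<^sub>R axis i 1 + t *\<^sub>R axis j 1"
    using int_root[of x] assms by (auto simp: A_lat_def)
  have "s + t = 0" using assms(1) ij(4) by (simp add: A_lat_iff)
  then show ?thesis using ij
    by (metis (no_types, lifting) add.commute add.right_neutral diff_add_cancel diff_minus_eq_add scaleR_minus_left scaleR_one minus_add_cancel add_eq_0_iff)
qed

lemma A_Rset:
  assumes pq: "p \<noteq> q" and z: "z \<in> Rset A_lat (axis p 1 - axis q 1 :: real^'m)"
  shows "(\<exists>k. k \<noteq> p \<and> k \<noteq> q \<and> z = axis q 1 - axis k 1) \<or> (\<exists>k. k \<noteq> p \<and> k \<noteq> q \<and> z = axis k 1 - axis p 1)"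
proof -
  have zA: "z \<in> A_lat" "z \<bullet> z = 2" and zx: "z \<bullet> (axis p 1 - axis q 1) = -1" using z by (auto simp: Rset_def)
  obtain a b where ab: "a \<noteq> b" "z = axis a 1 - axis b 1" using A_root[OF zA] by blast
  have "(axis a 1 - axis b 1 :: real^'m) \<bullet> (axis p 1 - axis q 1) = -1" using zx ab by simp
  then show ?thesis using ab pq by (auto simp: inner_diff_left inner_diff_right inner_axis_axis split: if_splits)
qed

lemma span_eq_from:
  assumes "P \<subseteq> E" "E \<subseteq> P \<union> uminus ` P"
  shows "span E = span (P::(real^'m) set)"
proof -
  have "E \<subseteq> span P"
  proof
    fix y assume "y \<in> E"
    then have "y \<in> P \<or> -y \<in> P" using assms(2) by force
    then show "y \<in> span P" by (metis span_base span_neg minus_minus)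
  qed
  then show ?thesis using assms(1) by (simp add: span_eq span_base subset_iff)
qed

lemma A_case:
  assumes pq: "p \<noteq> q"
  defines "x0 \<equiv> (axis p 1 - axis q 1 :: real^'m)"
  shows "dim (span (Eset A_lat x0)) = CARD('m) - 2 \<and> card (lines_of (Eset A_lat x0)) = CARD('m) - 2"
proof -
  define K where "K = {k. k \<noteq> p \<and> k \<noteq> q}"
  define g where "g k = (axis p 1 + axis q 1 - 2 *\<^sub>R axis k 1 :: real^'m)" for k
  define P where "P = g ` K"
  have x0A: "x0 \<in> A_lat" "x0 \<bullet> x0 = 2" using pq
    by (auto simp: x0_def A_lat_iff int_vec_diff int_vec_axis inner_diff_left inner_diff_right inner_axis_axis)
  have E: "Eset A_lat x0 = (\<lambda>z. x0 + 2 *\<^sub>R z) ` Rset A_lat x0"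
    by (rule Eset_eq[OF evenlat_A x0A])
  have PE: "P \<subseteq> Eset A_lat x0"
  proof
    fix y assume "y \<in> P"
    then obtain k where k: "k \<noteq> p" "k \<noteq> q" "y = g k" by (auto simp: P_def K_def)
    define z where "z = (axis q 1 - axis k 1 :: real^'m)"
    have "z \<in> Rset A_lat x0" using k pq
      by (auto simp: Rset_def z_def x0_def A_lat_iff int_vec_diff int_vec_axis inner_diff_left inner_diff_right inner_axis_axis)
    moreover have "y = x0 + 2 *\<^sub>R z" using k by (simp add: x0_def z_def g_def algebra_simps scaleR_2)
    ultimately show "y \<in> Eset A_lat x0" unfolding E by blast
  qed
  have EP: "Eset A_lat x0 \<subseteq> P \<union> uminus ` P"
  proof
    fix y assume "y \<in> Eset A_lat x0"
    then obtain z where z: "z \<in> Rset A_lat x0" and y: "y = x0 + 2 *\<^sub>R z" unfolding E by blast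
    from A_Rset[OF pq z[unfolded x0_def]] show "y \<in> P \<union> uminus ` P"
    proof
      assume "\<exists>k. k \<noteq> p \<and> k \<noteq> q \<and> z = axis q 1 - axis k 1"
      then obtain k where k: "k \<noteq> p" "k \<noteq> q" "z = axis q 1 - axis k 1" by blast
      have "y = g k" unfolding y k(3) by (simp add: x0_def g_def algebra_simps scaleR_2)
      then show ?thesis using k by (auto simp: P_def K_def)
    next
      assume "\<exists>k. k \<noteq> p \<and> k \<noteq> q \<and> z = axis k 1 - axis p 1"
      then obtain k where k: "k \<noteq> p" "k \<noteq> q" "z = axis k 1 - axis p 1" by blast
      have "y = - g k" unfolding y k(3) by (simp add: x0_def g_def algebra_simps scaleR_2)
      then show ?thesis using k by (auto simp: P_def K_def)
    qed
  qed
  have gk: "g k $ j = (if j = p then 1 else 0) + (if j = q then 1 else 0) - (if j = k then 2 else 0)" for k j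
    by (simp add: g_def axis_def)
  have injg: "inj_on g K"
  proof (rule inj_onI)
    fix k k' assume "k \<in> K" "k' \<in> K" "g k = g k'"
    then have "g k $ k = g k' $ k" by simp
    then show "k = k'" using \<open>k \<in> K\<close> \<open>k' \<in> K\<close> by (auto simp: gk K_def split: if_splits)
  qed
  have cardK: "card K = CARD('m) - 2"
  proof -
    have "K = UNIV - {p,q}" by (auto simp: K_def)
    then show ?thesis using pq by (simp add: card_Diff_subset)
  qed
  have cardP: "card P = card K" unfolding P_def by (rule card_image[OF injg])
  have lines: "card (lines_of (Eset A_lat x0)) = card P"
  proof (rule card_lines[OF PE EP])
    show "finite P" by (simp add: P_def)
    show "\<forall>y\<in>P. y \<bullet> y = 6" using pq
      by (auto simp: P_def K_def g_def inner_diff_left inner_diff_right inner_add_left inner_add_right inner_axis_axis)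
    show "(6::real) \<noteq> 0" by simp
    show "\<forall>y\<in>P. \<forall>y'\<in>P. y' \<noteq> - y"
    proof (intro ballI notI)
      fix y y' assume "y \<in> P" "y' \<in> P" "y' = -y"
      then obtain k k' where "k \<in> K" "k' \<in> K" "y = g k" "y' = g k'" by (auto simp: P_def)
      then have "g k' = - g k" using \<open>y' = -y\<close> by simp
      then have "g k' $ p = - (g k $ p)" by simp
      then show False using \<open>k \<in> K\<close> \<open>k' \<in> K\<close> pq by (auto simp: gk K_def)
    qed
  qed
  have indep: "independent P"
  proof (rule independent_if_scalars_zero)
    show "finite P" by (simp add: P_def)
    fix f v assume s: "(\<Sum>x\<in>P. f x *\<^sub>R x) = 0" and v: "v \<in> P"
    then obtain k0 where k0: "k0 \<in> K" "v = g k0" by (auto simp: P_def)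
    have "0 = (\<Sum>x\<in>P. f x *\<^sub>R x) $ k0" using s by simp
    also have "\<dots> = (\<Sum>x\<in>P. f x * x $ k0)" by (simp add: sum_component)
    also have "\<dots> = (\<Sum>k\<in>K. f (g k) * g k $ k0)" unfolding P_def by (simp add: sum.reindex[OF injg])
    also have "\<dots> = (\<Sum>k\<in>K. if k = k0 then - 2 * f (g k0) else 0)"
      using k0 by (intro sum.cong) (auto simp: gk K_def)
    also have "\<dots> = - 2 * f (g k0)" using k0 by (simp add: sum.delta)
    finally show "f v = 0" using k0 by simp
  qed
  have "dim (span (Eset A_lat x0)) = card P"
    using span_eq_from[OF PE EP] dim_span_eq_card_independent[OF indep] by simp
  then show ?thesis using lines cardP cardK by simp
qed

lemma A_main:
  assumes "CARD('m) \<ge> 2"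
  shows "prop_holds (A_lat :: (real^'m) set) (CARD('m) - 2) (CARD('m) - 2)"
  unfolding prop_holds_def
proof (intro ballI impI)
  fix x0 :: "real^'m" assume x0: "x0 \<in> A_lat" "Nrm x0 = 2"
  then obtain p q where pq: "p \<noteq> q" "x0 = axis p 1 - axis q 1" using A_root[of x0] by (auto simp: Nrm_def)
  have "dim (span (Eset A_lat x0)) = CARD('m) - 2" using A_case[OF pq(1)] pq(2) by simp
  moreover have "card (lines_of (Eset A_lat x0)) = CARD('m) - 2" using A_case[OF pq(1)] pq(2) by simp
  moreover have "\<forall>y\<in>Eset A_lat x0. \<forall>y'\<in>Eset A_lat x0. span {y} \<noteq> span {y'} \<longrightarrow> \<bar>y \<bullet> y'\<bar> = 1 / 3 * (norm y * norm y')"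
    using angle_prop[OF evenlat_A] x0 by (simp add: Nrm_def)
  ultimately show "dim (span (Eset A_lat x0)) = CARD('m) - 2 \<and> card (lines_of (Eset A_lat x0)) = CARD('m) - 2 \<and>
    (\<forall>y\<in>Eset A_lat x0. \<forall>y'\<in>Eset A_lat x0. span {y} \<noteq> span {y'} \<longrightarrow> \<bar>y \<bullet> y'\<bar> = 1 / 3 * (norm y * norm y'))" by blast
qed

lemma D_lat_iff: "x \<in> D_lat \<longleftrightarrow> int_vec x \<and> vsum x / 2 \<in> \<int>"
proof -
  have "(\<exists>k\<in>\<int>. vsum x = 2 * k) \<longleftrightarrow> vsum x / 2 \<in> \<int>"
    by (metis nonzero_mult_div_cancel_left zero_neq_numeral times_divide_eq_right mult.commute divide_self_if mult_1 )
  then show ?thesis by (simp add: D_lat_def vsum_def)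
qed

lemma vsum_zero[simp]: "vsum 0 = 0" by (simp add: vsum_def)

lemma evenlat_D: "evenlat (D_lat :: (real^'m) set)"
  unfolding evenlat_def
  by (auto simp: D_lat_iff int_vec_add int_vec_neg int_vec_inner int_vec_zero add_divide_distrib vsum_def[symmetric]
      intro!: int_vec_norm_even Ints_add)

lemma inner_axis_r: "(axis i (x::real) :: real^'m) \<bullet> axis j y = (if i = j then x * y else 0)"
  by (simp add: inner_axis_axis)

lemma inner_axis_11: "(axis i (1::real) :: real^'m) \<bullet> axis j 1 = (if i = j then 1 else 0)"
  by (simp add: inner_axis_axis)

lemma pm1_cases: "(s::real) = 1 \<or> s = -1 \<Longrightarrow> s * s = 1" by auto

lemma D_Rset:
  assumes ij: "i \<noteq> j" and s: "s = 1 \<or> s = -1" and t: "t = 1 \<or> t = -1"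
    and z: "z \<in> Rset D_lat (s *\<^sub>R axis i 1 + t *\<^sub>R axis j 1 :: real^'m)"
  shows "\<exists>k c. k \<noteq> i \<and> k \<noteq> j \<and> (c = 1 \<or> c = -1) \<and>
            (z = (-s) *\<^sub>R axis i 1 + c *\<^sub>R axis k 1 \<or> z = (-t) *\<^sub>R axis j 1 + c *\<^sub>R axis k 1)"
proof -
  have zD: "int_vec z" "z \<bullet> z = 2" and zx: "z \<bullet> (s *\<^sub>R axis i 1 + t *\<^sub>R axis j 1) = -1"
    using z by (auto simp: Rset_def D_lat_iff)
  obtain a b \<sigma> \<tau> where ab: "a \<noteq> b" "\<sigma> = 1 \<or> \<sigma> = -1" "\<tau> = 1 \<or> \<tau> = -1" "z = \<sigma> *\<^sub>R axis a 1 + \<tau> *\<^sub>R axis b 1"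
    using int_root[OF zD] by blast
  have "(\<sigma> *\<^sub>R axis a 1 + \<tau> *\<^sub>R axis b 1 :: real^'m) \<bullet> (s *\<^sub>R axis i 1 + t *\<^sub>R axis j 1) = -1"
    using zx ab by simp
  then have e: "\<sigma> * s * (if a = i then 1 else 0) + \<sigma> * t * (if a = j then 1 else 0)
      + \<tau> * s * (if b = i then 1 else 0) + \<tau> * t * (if b = j then 1 else 0) = -1"
    by (simp add: inner_add_left inner_add_right inner_axis_11 algebra_simps)
  have ss: "s * s = 1" "t * t = 1" "\<sigma> * \<sigma> = 1" "\<tau> * \<tau> = 1" using s t ab by auto
  have neg: "x = - y" if "x * y = -1" "y * y = 1" for x y :: real
  proof -
    have "x = x * (y * y)" using that by simp
    also have "\<dots> = (x * y) * y" by (simp add: mult.assoc)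
    also have "\<dots> = -y" using that by simp
    finally show ?thesis .
  qed
  consider (ai) "a = i" | (aj) "a = j" | (ao) "a \<noteq> i" "a \<noteq> j" by blast
  then show ?thesis
  proof cases
    case ai
    show ?thesis
    proof (cases "b = j")
      case True then have "\<sigma> * s + \<tau> * t = -1" using e ai ab ij by simp
      then have False using s t ab by auto
      then show ?thesis ..
    next
      case False
      then have "\<sigma> * s = -1" using e ai ab ij by simp
      then have "\<sigma> = -s" using neg ss by blast
      then show ?thesis using ai False ab ij by (intro exI[of _ b] exI[of _ \<tau>]) auto
    qed
  next
    case aj
    show ?thesis
    proof (cases "b = i")
      case True then have "\<sigma> * t + \<tau> * s = -1" using e aj ab ij by simp
      then have False using s t ab by auto
      then show ?thesis ..
    next
      case False
      then have "\<sigma> * t = -1" using e aj ab ij by simp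
      then have "\<sigma> = -t" using neg ss by blast
      then show ?thesis using aj False ab ij by (intro exI[of _ b] exI[of _ \<tau>]) auto
    qed
  next
    case ao
    consider (bi) "b = i" | (bj) "b = j" | (bo) "b \<noteq> i" "b \<noteq> j" by blast
    then show ?thesis
    proof cases
      case bi
      then have "\<tau> * s = -1" using e ao ab ij by simp
      then have "\<tau> = -s" using neg ss by blast
      then have "z = (-s) *\<^sub>R axis i 1 + \<sigma> *\<^sub>R axis a 1" using ab bi by (simp add: add.commute)
      then show ?thesis using ao ab by (intro exI[of _ a] exI[of _ \<sigma>]) auto
    next
      case bj
      then have "\<tau> * t = -1" using e ao ab ij by simp
      then have "\<tau> = -t" using neg ss by blast
      then have "z = (-t) *\<^sub>R axis j 1 + \<sigma> *\<^sub>R axis a 1" using ab bj by (simp add: add.commute)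
      then show ?thesis using ao ab by (intro exI[of _ a] exI[of _ \<sigma>]) auto
    next
      case bo
      then have False using e ao by simp
      then show ?thesis ..
    qed
  qed
qed

lemma pm1_Ints: "c = 1 \<or> c = -1 \<Longrightarrow> (c::real) \<in> \<int>" by auto

lemmas ip_simps = inner_add_left inner_add_right inner_diff_left inner_diff_right inner_minus_left inner_minus_right
  inner_scaleR_left inner_scaleR_right inner_axis_11

lemma int_vec_comb: "s \<in> \<int> \<Longrightarrow> t \<in> \<int> \<Longrightarrow> int_vec (s *\<^sub>R axis i 1 + t *\<^sub>R axis j 1 :: real^'m)"
  by (intro int_vec_add int_vec_scale int_vec_axis) auto

lemma D_case:
  assumes ij: "i \<noteq> j" and s: "s = 1 \<or> s = -1" and t: "t = 1 \<or> t = -1" and n3: "CARD('m) \<ge> 3"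
  defines "x0 \<equiv> (s *\<^sub>R axis i 1 + t *\<^sub>R axis j 1 :: real^'m)"
  shows "dim (span (Eset D_lat x0)) = CARD('m) - 1 \<and> card (lines_of (Eset D_lat x0)) = 2 * (CARD('m) - 2)"
proof -
  define K where "K = {k. k \<noteq> i \<and> k \<noteq> j}"
  define C where "C = {1, -1::real}"
  define u where "u = (s *\<^sub>R axis i 1 - t *\<^sub>R axis j 1 :: real^'m)"
  define g where "g kc = u + (2 * snd kc) *\<^sub>R axis (fst kc) 1" for kc :: "'m \<times> real"
  define P where "P = g ` (K \<times> C)"
  have ss: "s * s = 1" "t * t = 1" using s t by auto
  have x0D: "x0 \<in> D_lat" "x0 \<bullet> x0 = 2" using ij s t
    by (auto simp: x0_def D_lat_iff int_vec_add int_vec_diff int_vec_neg int_vec_scale int_vec_axis inner_add_left inner_add_right inner_axis_11)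
  have E: "Eset D_lat x0 = (\<lambda>z. x0 + 2 *\<^sub>R z) ` Rset D_lat x0"
    by (rule Eset_eq[OF evenlat_D x0D])
  have gcomp: "g (k, c) $ l = (if l = i then s else 0) - (if l = j then t else 0) + (if l = k then 2 * c else 0)" for k c l
    by (simp add: g_def u_def axis_def)
  have PE: "P \<subseteq> Eset D_lat x0"
  proof
    fix y assume "y \<in> P"
    then obtain k c where k: "k \<noteq> i" "k \<noteq> j" "c = 1 \<or> c = -1" "y = g (k, c)" by (auto simp: P_def K_def C_def)
    define z where "z = ((-t) *\<^sub>R axis j 1 + c *\<^sub>R axis k 1 :: real^'m)"
    have "vsum z / 2 \<in> \<int>" using t k(3) by (auto simp: z_def)
    moreover have "int_vec z" unfolding z_def using t k(3) by (intro int_vec_comb) auto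
    ultimately have "z \<in> D_lat" by (simp add: D_lat_iff)
    moreover have "z \<bullet> z = 2" "z \<bullet> x0 = -1" using k ij ss k(3)
      by (auto simp: z_def x0_def ip_simps)
    moreover have "y = x0 + 2 *\<^sub>R z" unfolding k(4) by (simp add: vec_eq_iff x0_def z_def g_def u_def axis_def algebra_simps)
    ultimately show "y \<in> Eset D_lat x0" unfolding E by (auto simp: Rset_def)
  qed
  have EP: "Eset D_lat x0 \<subseteq> P \<union> uminus ` P"
  proof
    fix y assume "y \<in> Eset D_lat x0"
    then obtain z where z: "z \<in> Rset D_lat x0" and y: "y = x0 + 2 *\<^sub>R z" unfolding E by blast
    obtain k c where kc: "k \<noteq> i" "k \<noteq> j" "c = 1 \<or> c = -1"
       "z = (-s) *\<^sub>R axis i 1 + c *\<^sub>R axis k 1 \<or> z = (-t) *\<^sub>R axis j 1 + c *\<^sub>R axis k 1"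
      using D_Rset[OF ij s t z[unfolded x0_def]] by blast
    from kc(4) show "y \<in> P \<union> uminus ` P"
    proof
      assume zz: "z = (-s) *\<^sub>R axis i 1 + c *\<^sub>R axis k 1"
      have "y = - g (k, -c)" unfolding y zz by (simp add: vec_eq_iff x0_def g_def u_def axis_def algebra_simps)
      moreover have "(k, -c) \<in> K \<times> C" using kc by (auto simp: K_def C_def)
      ultimately show ?thesis by (auto simp: P_def)
    next
      assume zz: "z = (-t) *\<^sub>R axis j 1 + c *\<^sub>R axis k 1"
      have "y = g (k, c)" unfolding y zz by (simp add: vec_eq_iff x0_def g_def u_def axis_def algebra_simps)
      moreover have "(k, c) \<in> K \<times> C" using kc by (auto simp: K_def C_def)
      ultimately show ?thesis by (auto simp: P_def)
    qed
  qed
  have injg: "inj_on g (K \<times> C)"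
  proof (rule inj_onI)
    fix a b assume a: "a \<in> K \<times> C" and b: "b \<in> K \<times> C" and e: "g a = g b"
    obtain k c where kc: "a = (k, c)" by force
    obtain k' c' where kc': "b = (k', c')" by force
    have "g (k, c) $ k = g (k', c') $ k" using e kc kc' by simp
    then have "2 * c = (if k = k' then 2 * c' else 0)" using a kc by (simp add: gcomp K_def)
    moreover have "c \<noteq> 0" using a kc by (auto simp: C_def)
    ultimately show "a = b" using kc kc' by (auto split: if_splits)
  qed
  have cardK: "card K = CARD('m) - 2"
  proof -
    have "K = UNIV - {i,j}" by (auto simp: K_def)
    then show ?thesis using ij by (simp add: card_Diff_subset)
  qed
  have cardP: "card P = 2 * (CARD('m) - 2)"
    unfolding P_def card_image[OF injg] using cardK by (simp add: C_def card_cartesian_product)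
  have lines: "card (lines_of (Eset D_lat x0)) = card P"
  proof (rule card_lines[OF PE EP])
    show "finite P" by (simp add: P_def C_def)
    show "\<forall>y\<in>P. y \<bullet> y = 6" using ij ss
      by (auto simp: P_def K_def C_def g_def u_def inner_diff_left inner_diff_right inner_add_left inner_add_right inner_axis_11)
    show "(6::real) \<noteq> 0" by simp
    show "\<forall>y\<in>P. \<forall>y'\<in>P. y' \<noteq> - y"
    proof (intro ballI notI)
      fix y y' assume "y \<in> P" "y' \<in> P" "y' = -y"
      then obtain k c k' c' where "k \<in> K" "k' \<in> K" "y = g (k, c)" "y' = g (k', c')" by (auto simp: P_def)
      then have "g (k', c') = - g (k, c)" using \<open>y' = -y\<close> by simp
      then have "g (k', c') $ i = - (g (k, c) $ i)" by simp
      then show False using \<open>k \<in> K\<close> \<open>k' \<in> K\<close> ij s by (auto simp: gcomp K_def)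
    qed
  qed
  define B where "B = insert u ((\<lambda>k. axis k 1) ` K)"
  obtain k0 where k0: "k0 \<in> K"
  proof -
    have "card K > 0" using cardK n3 by simp
    then show ?thesis using that by (metis card_gt_0_iff ex_in_conv)
  qed
  have spanPB: "span P = span B"
  proof -
    have "P \<subseteq> span B"
    proof
      fix y assume "y \<in> P"
      then obtain k c where "k \<in> K" "y = g (k, c)" by (auto simp: P_def)
      moreover have "u \<in> span B" "axis k 1 \<in> span B" using \<open>k \<in> K\<close> by (auto simp: B_def intro: span_base)
      ultimately show "y \<in> span B" unfolding g_def by (auto intro!: span_add span_scale)
    qed
    moreover have "B \<subseteq> span P"
    proof
      fix b assume "b \<in> B"
      then consider "b = u" | k where "k \<in> K" "b = axis k 1" by (auto simp: B_def)
      then show "b \<in> span P"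
      proof cases
        case 1
        have "u = (1/2) *\<^sub>R (g (k0, 1) + g (k0, -1))" by (simp add: vec_eq_iff g_def u_def axis_def algebra_simps)
        moreover have "g (k0, 1) \<in> P" "g (k0, -1) \<in> P" using k0 by (auto simp: P_def C_def)
        ultimately show ?thesis using 1 by (metis span_add span_scale span_base)
      next
        case 2
        have "axis k 1 = (1/4) *\<^sub>R (g (k, 1) - g (k, -1))"
          by (simp add: vec_eq_iff g_def u_def axis_def algebra_simps)
        moreover have "g (k, 1) \<in> P" "g (k, -1) \<in> P" using 2 by (auto simp: P_def C_def)
        ultimately show ?thesis using 2 by (metis span_diff span_scale span_base)
      qed
    qed
    ultimately show ?thesis by (simp add: span_eq)
  qed
  have uK: "u \<notin> (\<lambda>k. axis k 1) ` K"
  proof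
    assume "u \<in> (\<lambda>k. axis k 1) ` K"
    then obtain k where "k \<in> K" "u = axis k 1" by auto
    then have "u $ i = axis k 1 $ i" by simp
    then show False using \<open>k \<in> K\<close> ij s by (auto simp: u_def axis_def K_def)
  qed
  have cardB: "card B = card K + 1"
  proof -
    have "inj_on (\<lambda>k. axis k (1::real) :: real^'m) K" by (auto intro!: inj_onI simp: axis_eq_axis)
    then show ?thesis using uK by (simp add: B_def card_image)
  qed
  have indB: "independent B"
  proof (rule pairwise_orthogonal_independent)
    show "pairwise orthogonal B" unfolding pairwise_def B_def orthogonal_def
      using ij by (auto simp: u_def K_def inner_diff_left inner_diff_right inner_axis_11)
    show "0 \<notin> B"
    proof
      assume "0 \<in> B"
      then consider "u = 0" | k where "axis k (1::real) = (0::real^'m)" by (auto simp: B_def)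
      then show False
      proof cases
        case 1 then have "u $ i = 0" by simp
        then show False using ij s by (simp add: u_def axis_def)
      next
        case 2 then show False by (simp add: axis_eq_0_iff)
      qed
    qed
  qed
  have "dim (span (Eset D_lat x0)) = card B"
    using span_eq_from[OF PE EP] spanPB dim_span_eq_card_independent[OF indB] by simp
  then show ?thesis using lines cardP cardB cardK n3 by simp
qed

lemma D_main:
  assumes n: "CARD('m) \<ge> 4"
  shows "prop_holds (D_lat :: (real^'m) set) (CARD('m) - 1) (2 * (CARD('m) - 1) - 2)"
  unfolding prop_holds_def
proof (intro ballI impI)
  fix x0 :: "real^'m" assume x0: "x0 \<in> D_lat" "Nrm x0 = 2"
  then obtain i j s t where ij: "i \<noteq> j" "s = 1 \<or> s = -1" "t = 1 \<or> t = -1" "x0 = s *\<^sub>R axis i 1 + t *\<^sub>R axis j 1"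
    using int_root[of x0] by (auto simp: Nrm_def D_lat_iff)
  have c: "dim (span (Eset D_lat x0)) = CARD('m) - 1 \<and> card (lines_of (Eset D_lat x0)) = 2 * (CARD('m) - 2)"
    using D_case[OF ij(1-3)] n ij(4) by simp
  have "2 * (CARD('m) - 1) - 2 = 2 * (CARD('m) - 2)" using n by simp
  moreover have "\<forall>y\<in>Eset D_lat x0. \<forall>y'\<in>Eset D_lat x0. span {y} \<noteq> span {y'} \<longrightarrow> \<bar>y \<bullet> y'\<bar> = 1 / 3 * (norm y * norm y')"
    using angle_prop[OF evenlat_D] x0 by (simp add: Nrm_def)
  ultimately show "dim (span (Eset D_lat x0)) = CARD('m) - 1 \<and> card (lines_of (Eset D_lat x0)) = 2 * (CARD('m) - 1) - 2 \<and>
    (\<forall>y\<in>Eset D_lat x0. \<forall>y'\<in>Eset D_lat x0. span {y} \<noteq> span {y'} \<longrightarrow> \<bar>y \<bullet> y'\<bar> = 1 / 3 * (norm y * norm y'))"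
    using c by simp
qed

lemma AD_part:
  shows "(CARD('a::finite) \<ge> 2 \<longrightarrow>
            (let n = CARD('a) - 1; r = n - 1 in prop_holds (A_lat :: (real^'a) set) r r))
       \<and> (CARD('b::finite) \<ge> 4 \<longrightarrow>
            (let n = CARD('b); r = n - 1 in prop_holds (D_lat :: (real^'b) set) r (2 * r - 2)))"
  using A_main[where 'm='a] D_main[where 'm='b] by (simp add: Let_def numeral_2_eq_2)

lemma UNIV8: "(UNIV::8 set) = {0,1,2,3,4,5,6,7}"
proof -
  have "x \<in> {0,1,2,3,4,5,6,7}" for x :: 8
  proof (induct x)
    case (of_int z)
    then have "z \<in> {0,1,2,3,4,5,6,7}" by auto
    then show ?case by auto
  qed
  then show ?thesis by auto
qed

lemma d8: "(0::8) \<notin> {1,2,3,4,5,6,7}" "(1::8) \<notin> {2,3,4,5,6,7}" "(2::8) \<notin> {3,4,5,6,7}"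
  "(3::8) \<notin> {4,5,6,7}" "(4::8) \<notin> {5,6,7}" "(5::8) \<notin> {6,7}" "(6::8) \<notin> {7}"
  by simp_all

lemma sum8: "(\<Sum>k\<in>(UNIV::8 set). f k) = f 0 + (f 1 + (f 2 + (f 3 + (f 4 + (f 5 + (f 6 + f 7))))))"
  unfolding UNIV8
  by (simp only: sum.insert finite.emptyI finite_insert d8 sum.empty add_0_right simp_thms empty_iff)

lemma all8: "(\<forall>k::8. P k) \<longleftrightarrow> P 0 \<and> P 1 \<and> P 2 \<and> P 3 \<and> P 4 \<and> P 5 \<and> P 6 \<and> P 7"
  by (metis UNIV8 UNIV_I insertE empty_iff)

definition vec8 :: "real \<Rightarrow> real \<Rightarrow> real \<Rightarrow> real \<Rightarrow> real \<Rightarrow> real \<Rightarrow> real \<Rightarrow> real \<Rightarrow> real^8" where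
  "vec8 a0 a1 a2 a3 a4 a5 a6 a7 = (\<chi> k. if k = 0 then a0 else if k = 1 then a1 else if k = 2 then a2 else
      if k = 3 then a3 else if k = 4 then a4 else if k = 5 then a5 else if k = 6 then a6 else a7)"

lemma vec8_nth[simp]:
  "vec8 a0 a1 a2 a3 a4 a5 a6 a7 $ 0 = a0" "vec8 a0 a1 a2 a3 a4 a5 a6 a7 $ 1 = a1"
  "vec8 a0 a1 a2 a3 a4 a5 a6 a7 $ 2 = a2" "vec8 a0 a1 a2 a3 a4 a5 a6 a7 $ 3 = a3"
  "vec8 a0 a1 a2 a3 a4 a5 a6 a7 $ 4 = a4" "vec8 a0 a1 a2 a3 a4 a5 a6 a7 $ 5 = a5"
  "vec8 a0 a1 a2 a3 a4 a5 a6 a7 $ 6 = a6" "vec8 a0 a1 a2 a3 a4 a5 a6 a7 $ 7 = a7"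
  by (simp_all add: vec8_def)

lemma vec8_eta: "x = vec8 (x$0) (x$1) (x$2) (x$3) (x$4) (x$5) (x$6) (x$7)"
  by (simp add: vec_eq_iff all8)

lemma vec8_eq_iff: "vec8 a0 a1 a2 a3 a4 a5 a6 a7 = vec8 b0 b1 b2 b3 b4 b5 b6 b7 \<longleftrightarrow>
   a0 = b0 \<and> a1 = b1 \<and> a2 = b2 \<and> a3 = b3 \<and> a4 = b4 \<and> a5 = b5 \<and> a6 = b6 \<and> a7 = b7"
  by (simp add: vec_eq_iff all8)

lemma vec8_add: "vec8 a0 a1 a2 a3 a4 a5 a6 a7 + vec8 b0 b1 b2 b3 b4 b5 b6 b7 =
   vec8 (a0+b0) (a1+b1) (a2+b2) (a3+b3) (a4+b4) (a5+b5) (a6+b6) (a7+b7)"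
  by (simp add: vec_eq_iff all8)
lemma vec8_diff: "vec8 a0 a1 a2 a3 a4 a5 a6 a7 - vec8 b0 b1 b2 b3 b4 b5 b6 b7 =
   vec8 (a0-b0) (a1-b1) (a2-b2) (a3-b3) (a4-b4) (a5-b5) (a6-b6) (a7-b7)"
  by (simp add: vec_eq_iff all8)
lemma vec8_neg: "- vec8 a0 a1 a2 a3 a4 a5 a6 a7 = vec8 (-a0) (-a1) (-a2) (-a3) (-a4) (-a5) (-a6) (-a7)"
  by (simp add: vec_eq_iff all8)
lemma vec8_scale: "c *\<^sub>R vec8 a0 a1 a2 a3 a4 a5 a6 a7 =
   vec8 (c*a0) (c*a1) (c*a2) (c*a3) (c*a4) (c*a5) (c*a6) (c*a7)"
  by (simp add: vec_eq_iff all8)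
lemma vec8_inner: "vec8 a0 a1 a2 a3 a4 a5 a6 a7 \<bullet> vec8 b0 b1 b2 b3 b4 b5 b6 b7 =
   a0*b0 + a1*b1 + a2*b2 + a3*b3 + a4*b4 + a5*b5 + a6*b6 + a7*b7"
  by (simp add: inner_sum sum8 add.assoc)
lemma vec8_vsum: "vsum (vec8 a0 a1 a2 a3 a4 a5 a6 a7) = a0 + a1 + a2 + a3 + a4 + a5 + a6 + a7"
  by (simp add: vsum_def sum8 add.assoc)
lemma vec8_int: "int_vec (vec8 a0 a1 a2 a3 a4 a5 a6 a7) \<longleftrightarrow>
   a0 \<in> \<int> \<and> a1 \<in> \<int> \<and> a2 \<in> \<int> \<and> a3 \<in> \<int> \<and> a4 \<in> \<int> \<and> a5 \<in> \<int> \<and> a6 \<in> \<int> \<and> a7 \<in> \<int>"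
  by (simp add: int_vec_def all8)
lemma vec8_zero: "(0::real^8) = vec8 0 0 0 0 0 0 0 0"
  by (simp add: vec_eq_iff all8)
lemma e_half_vec8: "e_half = vec8 (1/2) (1/2) (1/2) (1/2) (1/2) (1/2) (1/2) (1/2)"
  by (simp add: vec_eq_iff all8 e_half_def)
lemma axis8:
  "axis 0 c = vec8 c 0 0 0 0 0 0 0" "axis 1 c = vec8 0 c 0 0 0 0 0 0"
  "axis 2 c = vec8 0 0 c 0 0 0 0 0" "axis 3 c = vec8 0 0 0 c 0 0 0 0"
  "axis 4 c = vec8 0 0 0 0 c 0 0 0" "axis 5 c = vec8 0 0 0 0 0 c 0 0"
  "axis 6 c = vec8 0 0 0 0 0 0 c 0" "axis 7 c = vec8 0 0 0 0 0 0 0 c"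
  by (subst vec_eq_iff, subst all8, simp add: axis_def)+

lemmas vec8_simps = vec8_add vec8_diff vec8_neg vec8_scale vec8_inner vec8_vsum vec8_int vec8_eq_iff

lemma vsum_e_half: "vsum e_half = 4"
  by (simp add: vsum_def e_half_def sum8)
lemma e_half_inner: "x \<bullet> e_half = vsum x / 2"
  by (simp add: inner_sum vsum_def e_half_def sum_divide_distrib)
lemma e_half_self: "e_half \<bullet> e_half = 2"
  by (simp add: e_half_inner vsum_e_half)
lemma int_vec_2e: "int_vec (2 *\<^sub>R e_half)"
  by (simp add: int_vec_def e_half_def)

lemma int_shift4: "(a - 4) / 2 \<in> \<int> \<longleftrightarrow> (a::real) / 2 \<in> \<int>"
proof -
  have "(a - 4) / 2 = a / 2 - 2" by simp
  then show ?thesis by (metis Ints_diff Ints_add Ints_numeral diff_add_cancel)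
qed

lemma E8_iff: "x \<in> E8_lat \<longleftrightarrow> (int_vec x \<or> int_vec (x - e_half)) \<and> vsum x / 2 \<in> \<int>"
proof -
  have "x \<in> {x + e_half |x. x \<in> D_lat} \<longleftrightarrow> x - e_half \<in> D_lat"
  proof
    assume "x \<in> {x + e_half |x. x \<in> D_lat}"
    then obtain y where "x = y + e_half" "y \<in> D_lat" by blast
    then show "x - e_half \<in> D_lat" by simp
  next
    assume "x - e_half \<in> D_lat"
    then show "x \<in> {x + e_half |x. x \<in> D_lat}" by (intro CollectI exI[of _ "x - e_half"]) simp
  qed
  moreover have "vsum (x - e_half) / 2 = vsum x / 2 - 2" by (simp add: vsum_e_half diff_divide_distrib)
  moreover have "vsum x / 2 - 2 \<in> \<int> \<longleftrightarrow> vsum x / 2 \<in> \<int>"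
    by (metis Ints_diff Ints_add Ints_numeral diff_add_cancel)
  ultimately have "x - e_half \<in> D_lat \<longleftrightarrow> int_vec (x - e_half) \<and> vsum x / 2 \<in> \<int>"
    using D_lat_iff[of "x - e_half"] by (simp add: vsum_e_half int_shift4)
  moreover have "x \<in> E8_lat \<longleftrightarrow> x \<in> D_lat \<or> x \<in> {x + e_half |x. x \<in> D_lat}"
    unfolding E8_lat_def by blast
  ultimately show ?thesis using D_lat_iff[of x] \<open>x \<in> {x + e_half |x. x \<in> D_lat} \<longleftrightarrow> x - e_half \<in> D_lat\<close> by blast
qed

lemma half_add: "int_vec (x - e_half) \<Longrightarrow> int_vec (y - e_half) \<Longrightarrow> int_vec (x + y)"
proof -
  assume a: "int_vec (x - e_half)" "int_vec (y - e_half)"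
  have "x + y = (x - e_half) + (y - e_half) + 2 *\<^sub>R e_half" by (simp add: scaleR_2)
  then show ?thesis using a int_vec_2e by (metis int_vec_add)
qed

lemma half_add2: "int_vec x \<Longrightarrow> int_vec (y - e_half) \<Longrightarrow> int_vec (x + y - e_half)"
  by (metis int_vec_add add_diff_eq)

lemma half_neg: "int_vec (x - e_half) \<Longrightarrow> int_vec (- x - e_half)"
proof -
  assume a: "int_vec (x - e_half)"
  have "- x - e_half = - (x - e_half) - 2 *\<^sub>R e_half" by (simp add: scaleR_2)
  then show ?thesis using a int_vec_2e by (metis int_vec_neg int_vec_diff)
qed

lemma int_half_inner: "int_vec x \<Longrightarrow> int_vec (y - e_half) \<Longrightarrow> vsum x / 2 \<in> \<int> \<Longrightarrow> x \<bullet> y \<in> \<int>"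
proof -
  assume a: "int_vec x" "int_vec (y - e_half)" "vsum x / 2 \<in> \<int>"
  have "x \<bullet> y = x \<bullet> (y - e_half) + x \<bullet> e_half" by (simp add: inner_diff_right)
  then show ?thesis using a int_vec_inner by (metis Ints_add e_half_inner)
qed

lemma half_half_inner: "int_vec (x - e_half) \<Longrightarrow> int_vec (y - e_half) \<Longrightarrow> vsum x / 2 \<in> \<int> \<Longrightarrow> vsum y / 2 \<in> \<int> \<Longrightarrow> x \<bullet> y \<in> \<int>"
proof -
  assume a: "int_vec (x - e_half)" "int_vec (y - e_half)" "vsum x / 2 \<in> \<int>" "vsum y / 2 \<in> \<int>"
  have "x \<bullet> y = (x - e_half) \<bullet> (y - e_half) + (vsum x / 2 + vsum y / 2 - 2)"
    by (simp add: inner_diff_left inner_diff_right e_half_inner vsum_e_half inner_commute[of e_half])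
  moreover have "vsum x / 2 + vsum y / 2 - 2 \<in> \<int>" using a by (intro Ints_diff Ints_add) auto
  ultimately show ?thesis using a int_vec_inner by (metis Ints_add)
qed

lemma half_norm: "int_vec (x - e_half) \<Longrightarrow> vsum x / 2 \<in> \<int> \<Longrightarrow> x \<bullet> x / 2 \<in> \<int>"
proof -
  assume a: "int_vec (x - e_half)" "vsum x / 2 \<in> \<int>"
  define d where "d = x - e_half"
  have vd: "vsum d / 2 = vsum x / 2 - 2" by (simp add: d_def vsum_e_half diff_divide_distrib)
  have vd': "vsum d / 2 \<in> \<int>" by (metis vd Ints_diff Ints_numeral a(2))
  have "x = d + e_half" by (simp add: d_def)
  then have "x \<bullet> x / 2 = d \<bullet> d / 2 + vsum d / 2 + 1"
    by (simp add: inner_add_left inner_add_right e_half_inner vsum_e_half inner_commute[of e_half] add_divide_distrib)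
  moreover have "d \<bullet> d / 2 \<in> \<int>" using int_vec_norm_even[of d] a vd' by (simp add: d_def vsum_def)
  ultimately show ?thesis using vd' by (metis Ints_add Ints_1)
qed

lemma evenlat_E8: "evenlat E8_lat"
  unfolding evenlat_def
proof (intro conjI ballI)
  show "0 \<in> E8_lat" by (simp add: E8_iff int_vec_zero)
next
  fix x y :: "real^8" assume x: "x \<in> E8_lat" and y: "y \<in> E8_lat"
  have x': "int_vec x \<or> int_vec (x - e_half)" "vsum x / 2 \<in> \<int>" using x by (auto simp: E8_iff)
  have y': "int_vec y \<or> int_vec (y - e_half)" "vsum y / 2 \<in> \<int>" using y by (auto simp: E8_iff)
  have s: "vsum (x + y) / 2 \<in> \<int>" using x' y' by (simp add: add_divide_distrib)
  have "int_vec (x + y) \<or> int_vec (x + y - e_half)"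
    using x' y' half_add[of x y] half_add2[of x y] half_add2[of y x] int_vec_add[of x y]
    by (auto simp: add.commute)
  then show "x + y \<in> E8_lat" using s by (simp add: E8_iff)
  show "x \<bullet> y \<in> \<int>"
    using x' y' int_vec_inner[of x y] int_half_inner[of x y] int_half_inner[of y x] half_half_inner[of x y]
    by (auto simp: inner_commute)
next
  fix x :: "real^8" assume x: "x \<in> E8_lat"
  have x': "int_vec x \<or> int_vec (x - e_half)" "vsum x / 2 \<in> \<int>" using x by (auto simp: E8_iff)
  show "- x \<in> E8_lat"
    using x' half_neg[of x] int_vec_neg[of x] by (auto simp: E8_iff)
  show "x \<bullet> x / 2 \<in> \<int>"
    using x' half_norm[of x] int_vec_norm_even[of x] by (auto simp: vsum_def)
qed

lemma evenlat_sub: "evenlat L \<Longrightarrow> evenlat {x\<in>L. x \<bullet> a = 0}"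
  unfolding evenlat_def by (auto simp: inner_add_left)

lemma evenlat_E7: "evenlat E7_lat"
  unfolding E7_lat_def by (rule evenlat_sub[OF evenlat_E8])
lemma evenlat_E6: "evenlat E6_lat"
  unfolding E6_lat_def by (rule evenlat_sub[OF evenlat_E7])

lemma int_kk1: "(k::int) * (k + 1) \<ge> 0"
proof (cases "k \<ge> 0")
  case True then show ?thesis by simp
next
  case False then have "k \<le> -1" by simp
  then show ?thesis by (simp add: mult_nonpos_nonpos)
qed

lemma half_sq_ge: "(m::real) \<in> \<int> \<Longrightarrow> (m + 1/2)^2 \<ge> 1/4"
proof -
  assume "m \<in> \<int>"
  then obtain k where k: "m = of_int k" by (auto elim: Ints_cases)
  have "(m + 1/2)^2 - 1/4 = of_int (k * (k + 1))" using k by (simp add: power2_eq_square algebra_simps)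
  then show ?thesis using int_kk1[of k] by (metis diff_ge_0_iff_ge of_int_nonneg)
qed

lemma sq_quarter: "(y::real)^2 = 1/4 \<Longrightarrow> y = 1/2 \<or> y = -1/2"
proof -
  assume "y^2 = 1/4"
  then have "(y - 1/2) * (y + 1/2) = 0" by (simp add: power2_eq_square algebra_simps)
  then show ?thesis by auto
qed

lemma half_root:
  assumes a: "int_vec (x - e_half)" and n: "(x::real^8) \<bullet> x = 2"
  shows "\<forall>k. x$k = 1/2 \<or> x$k = -1/2"
proof -
  define f where "f k = (x$k)^2 - 1/4" for k
  have fnn: "\<forall>k\<in>UNIV. 0 \<le> f k"
  proof
    fix k
    have ek: "e_half $ k = 1/2" by (simp add: e_half_def)
    have xk: "x$k = (x - e_half)$k + 1/2" by (simp add: ek)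
    have "(x - e_half)$k \<in> \<int>" using a by (simp only: int_vec_def)
    then have "((x - e_half)$k + 1/2)^2 \<ge> 1/4" by (rule half_sq_ge)
    then show "0 \<le> f k" unfolding f_def xk[symmetric] by simp
  qed
  have "sum f UNIV = (\<Sum>k\<in>UNIV. (x$k)^2) - 2" by (simp add: f_def sum_subtractf)
  also have "(\<Sum>k\<in>UNIV. (x$k)^2) = 2" using n by (simp add: inner_sum power2_eq_square)
  finally have "sum f UNIV = 0" by simp
  then have "\<forall>k\<in>UNIV. f k = 0" using sum_nonneg_eq_0_iff[of UNIV f] fnn by simp
  then have "(x$k)^2 = 1/4" for k unfolding f_def by simp
  then show ?thesis using sq_quarter by blast
qed

lemma E8_root:
  assumes x: "x \<in> E8_lat" and n: "x \<bullet> x = 2"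
  shows "(int_vec x \<and> (\<exists>i j s t. i \<noteq> j \<and> (s = 1 \<or> s = -1) \<and> (t = 1 \<or> t = -1) \<and> x = s *\<^sub>R axis i 1 + t *\<^sub>R axis j 1))
       \<or> (int_vec (x - e_half) \<and> (\<forall>k. x$k = 1/2 \<or> x$k = -1/2))"
  using x n int_root[of x] half_root[of x] by (auto simp: E8_iff)

lemma E7_iff: "x \<in> E7_lat \<longleftrightarrow> x \<in> E8_lat \<and> x$6 = x$7"
  by (simp add: E7_lat_def inner_diff_right inner_axis)
lemma E6_iff: "x \<in> E6_lat \<longleftrightarrow> x \<in> E8_lat \<and> x$6 = x$7 \<and> x$5 = x$6"
  by (auto simp: E6_lat_def E7_iff inner_diff_right inner_axis)

lemma E_mem_low: "w \<in> E8_lat \<Longrightarrow> w$5 = 0 \<Longrightarrow> w$6 = 0 \<Longrightarrow> w$7 = 0 \<Longrightarrow> w \<in> E7_lat \<and> w \<in> E6_lat"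
  by (simp add: E7_iff E6_iff)

definition bb :: "real^8" where "bb = axis 0 1 + axis 1 1"

lemma bb_inner: "x \<bullet> bb = x$0 + x$1"
  by (simp add: bb_def inner_add_right inner_axis)

lemma pm_half_cases: "(y::real) = 1/2 \<or> y = -1/2 \<Longrightarrow> (2 * y = 1 \<or> 2 * y = -1) \<and> y * y = 1/4"
proof (erule disjE)
  assume a: "y = 1/2" show ?thesis unfolding a by simp
next
  assume a: "y = -1/2" show ?thesis unfolding a by simp
qed

lemma wit_half:
  assumes h: "\<forall>k. x0$k = 1/2 \<or> x0$k = -1/2"
  defines "w \<equiv> (2 * x0$0) *\<^sub>R axis 0 1 + (2 * x0$2) *\<^sub>R axis 2 (1::real) :: real^8"
  shows "w \<in> E8_lat \<and> w$5 = 0 \<and> w$6 = 0 \<and> w$7 = 0 \<and> w \<bullet> w = 2 \<and> \<bar>w \<bullet> x0\<bar> = 1 \<and> \<bar>w \<bullet> bb\<bar> = 1"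
proof -
  have h0: "(2 * x0$0 = 1 \<or> 2 * x0$0 = -1) \<and> x0$0 * x0$0 = 1/4" using h pm_half_cases by blast
  have h2: "(2 * x0$2 = 1 \<or> 2 * x0$2 = -1) \<and> x0$2 * x0$2 = 1/4" using h pm_half_cases by blast
  have iv: "int_vec w" unfolding w_def using h0 h2 by (intro int_vec_comb) auto
  have "vsum w / 2 = (2 * x0$0 + 2 * x0$2) / 2" by (simp add: w_def)
  then have "vsum w / 2 \<in> \<int>" using h0 h2 by auto
  then have "w \<in> E8_lat" using iv by (simp add: E8_iff)
  moreover have "w$5 = 0 \<and> w$6 = 0 \<and> w$7 = 0" by (simp add: w_def axis_def)
  moreover have "w \<bullet> w = 2" using h0 h2 by (simp add: w_def ip_simps algebra_simps)
  moreover have "w \<bullet> x0 = 2 * (x0$0 * x0$0) + 2 * (x0$2 * x0$2)"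
    by (simp add: w_def inner_add_left inner_axis' algebra_simps)
  then have "\<bar>w \<bullet> x0\<bar> = 1" using h0 h2 by simp
  moreover have "\<bar>w \<bullet> bb\<bar> = 1" using h0 by (auto simp: bb_inner w_def axis_def)
  ultimately show ?thesis by blast
qed

lemma wit_int:
  assumes ij: "i \<noteq> j" "i \<noteq> 0" "i \<noteq> 1" "j \<noteq> 0" and s: "s = 1 \<or> s = -1"
  defines "w \<equiv> axis 0 1 + s *\<^sub>R axis i (1::real) :: real^8"
  shows "w \<in> E8_lat \<and> w$5 = (if i = 5 then s else 0) \<and> w$6 = (if i = 6 then s else 0) \<and> w$7 = (if i = 7 then s else 0)
     \<and> w \<bullet> w = 2 \<and> w \<bullet> (s *\<^sub>R axis i 1 + t *\<^sub>R axis j 1) = 1 \<and> w \<bullet> bb = 1"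
proof -
  have iv: "int_vec w" unfolding w_def using s int_vec_comb[of 1 s 0 i] by auto
  have "vsum w / 2 \<in> \<int>" using s ij by (auto simp: w_def)
  then have "w \<in> E8_lat" using iv by (simp add: E8_iff)
  moreover have "w \<bullet> w = 2" using s ij by (auto simp: w_def ip_simps)
  moreover have "w \<bullet> (s *\<^sub>R axis i 1 + t *\<^sub>R axis j 1) = 1" using s ij by (auto simp: w_def ip_simps)
  moreover have "w \<bullet> bb = 1" using ij by (simp add: w_def bb_inner axis_def)
  ultimately show ?thesis using ij by (simp add: w_def axis_def)
qed

lemma E_sub: "E6_lat \<subseteq> E8_lat" "E7_lat \<subseteq> E8_lat"
  by (auto simp: E6_iff E7_iff)

lemma int_vec_pm: "c = 1 \<or> c = -1 \<Longrightarrow> (c::real) \<in> \<int>" by auto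

lemma wit_E7_67:
  assumes s: "s = 1 \<or> s = -1"
  shows "\<exists>w\<in>E7_lat. w \<bullet> w = 2 \<and> \<bar>w \<bullet> vec8 0 0 0 0 0 0 s s\<bar> = 1 \<and> \<bar>w \<bullet> bb\<bar> = 1"
proof -
  define h where "h = vec8 (1/2) (1/2) (1/2) (1/2) (1/2) (1/2) (s/2) (s/2)"
  have bbv: "bb = vec8 1 1 0 0 0 0 0 0" by (simp add: bb_def axis8 vec8_add)
  have "h \<in> E8_lat"
  proof -
    have "h - e_half = vec8 0 0 0 0 0 0 ((s-1)/2) ((s-1)/2)" by (simp add: h_def e_half_vec8 vec8_diff diff_divide_distrib)
    moreover have "(s-1)/2 \<in> \<int>" using s by auto
    ultimately have "int_vec (h - e_half)" by (simp add: vec8_int)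
    moreover have "vsum h / 2 \<in> \<int>" using s by (auto simp: h_def vec8_vsum)
    ultimately show ?thesis by (simp add: E8_iff)
  qed
  then have "h \<in> E7_lat" by (simp add: E7_iff h_def)
  moreover have "h \<bullet> h = 2" using s by (auto simp: h_def vec8_inner)
  moreover have "\<bar>h \<bullet> vec8 0 0 0 0 0 0 s s\<bar> = 1" using s by (auto simp: h_def vec8_inner)
  moreover have "\<bar>h \<bullet> bb\<bar> = 1" by (simp add: h_def bbv vec8_inner)
  ultimately show ?thesis by blast
qed

lemma x0_comp: "(s *\<^sub>R axis i 1 + t *\<^sub>R axis j 1 :: real^'m) $ k = (if k = i then s else 0) + (if k = j then t else 0)"
  by (simp add: axis_def)

lemma E_wit:
  assumes L: "L = E8_lat \<or> L = E7_lat \<or> L = E6_lat" and x0: "x0 \<in> L" "x0 \<bullet> x0 = 2" "x0 \<bullet> bb = 0"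
  shows "\<exists>w\<in>L. w \<bullet> w = 2 \<and> \<bar>w \<bullet> x0\<bar> = 1 \<and> \<bar>w \<bullet> bb\<bar> = 1"
proof -
  have low: "w \<in> L" if "w \<in> E8_lat" "w$5 = 0" "w$6 = 0" "w$7 = 0" for w
    using L E_mem_low[OF that] that(1) by auto
  have x8: "x0 \<in> E8_lat" using x0(1) L E_sub by auto
  from E8_root[OF x8 x0(2)] show ?thesis
  proof
    assume "int_vec (x0 - e_half) \<and> (\<forall>k. x0$k = 1/2 \<or> x0$k = -1/2)"
    then show ?thesis using wit_half[of x0] low by blast
  next
    assume "int_vec x0 \<and> (\<exists>i j s t. i \<noteq> j \<and> (s = 1 \<or> s = -1) \<and> (t = 1 \<or> t = -1) \<and> x0 = s *\<^sub>R axis i 1 + t *\<^sub>R axis j 1)"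
    then obtain i j s t where ij: "i \<noteq> j" and s: "s = 1 \<or> s = -1" and t: "t = 1 \<or> t = -1"
      and x0e: "x0 = s *\<^sub>R axis i 1 + t *\<^sub>R axis j 1" by blast
    have xc: "x0 $ k = (if k = i then s else 0) + (if k = j then t else 0)" for k
      unfolding x0e by (rule x0_comp)
    have b0: "x0$0 + x0$1 = 0" using x0(3) by (simp add: bb_inner)
    show ?thesis
    proof (cases "i \<in> {0,1} \<or> j \<in> {0,1}")
      case True
      have both: "i \<in> {0,1} \<and> j \<in> {0,1}"
      proof (rule ccontr)
        assume "\<not> (i \<in> {0,1} \<and> j \<in> {0,1})"
        then have "x0$0 + x0$1 = s \<or> x0$0 + x0$1 = t" using True ij by (auto simp: xc)
        then show False using b0 s t by auto
      qed
      define w :: "real^8" where "w = axis 1 1 + axis 2 (1::real)"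
      have "w \<in> E8_lat" using int_vec_comb[of 1 1 "1::8" "2::8"] by (simp add: E8_iff w_def)
      moreover have "w$5 = 0" "w$6 = 0" "w$7 = 0" by (simp_all add: w_def axis_def)
      ultimately have wL: "w \<in> L" using low by blast
      have "w \<bullet> w = 2" by (simp add: w_def ip_simps)
      moreover have "w \<bullet> x0 = x0$1 + x0$2" by (simp add: w_def inner_add_left inner_axis')
      then have "\<bar>w \<bullet> x0\<bar> = 1" using both ij s t by (auto simp: xc)
      moreover have "\<bar>w \<bullet> bb\<bar> = 1" by (simp add: w_def bb_inner axis_def)
      ultimately show ?thesis using wL by blast
    next
      case False
      then have nz: "i \<noteq> 0" "i \<noteq> 1" "j \<noteq> 0" "j \<noteq> 1" by auto
      have x0e': "x0 = t *\<^sub>R axis j 1 + s *\<^sub>R axis i 1" using x0e by (simp add: add.commute)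
      note W1 = wit_int[OF ij nz(1,2,3) s, of t]
      note W2 = wit_int[OF ij[symmetric] nz(3,4,1) t, of s]
      show ?thesis
      proof (cases "i \<notin> {5,6,7}")
        case True
        then show ?thesis using W1 low[of "axis 0 1 + s *\<^sub>R axis i 1"] x0e by auto
      next
        case Fi: False
        show ?thesis
        proof (cases "j \<notin> {5,6,7}")
          case True
          then show ?thesis using W2 low[of "axis 0 1 + t *\<^sub>R axis j 1"] x0e' by auto
        next
          case Fj: False
          consider "L = E8_lat" | "L = E7_lat" | "L = E6_lat" using L by blast
          then show ?thesis
          proof cases
            case 1 then show ?thesis using W1 x0e by auto
          next
            case 3
            then have "x0$5 = x0$6" "x0$6 = x0$7" using x0(1) by (auto simp: E6_iff)
            then show ?thesis using Fi Fj ij s t by (auto simp: xc)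
          next
            case 2
            then have e67: "x0$6 = x0$7" using x0(1) by (auto simp: E7_iff)
            show ?thesis
            proof (cases "i = 5")
              case True
              then show ?thesis using W1 x0e 2 by (auto simp: E7_iff)
            next
              case Fi5: False
              show ?thesis
              proof (cases "j = 5")
                case True
                then show ?thesis using W2 x0e' 2 by (auto simp: E7_iff)
              next
                case False
                then have ij67: "(i = 6 \<and> j = 7) \<or> (i = 7 \<and> j = 6)" using Fi Fj Fi5 ij by auto
                then have "s = t" using e67 by (auto simp: xc)
                then have "x0 = vec8 0 0 0 0 0 0 s s" using ij67
                  by (subst vec8_eta) (auto simp: xc vec8_eq_iff)
                then show ?thesis using wit_E7_67[OF s] 2 by simp
              qed
            qed
          qed
        qed
      qed
    qed
  qed
qed

lemma bbv: "bb = vec8 1 1 0 0 0 0 0 0" by (simp add: bb_def axis8 vec8_add)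

lemma bb_E8: "bb \<in> E8_lat" "bb \<bullet> bb = 2"
  by (simp_all add: bbv E8_iff vec8_int vec8_vsum vec8_inner)

lemma in_E_of:
  assumes L: "evenlat L" "bb \<in> L" "bb \<bullet> bb = 2" and z: "(1/2) *\<^sub>R (y - bb) \<in> Rset L bb"
  shows "y \<in> Eset L bb"
proof -
  have "y = bb + 2 *\<^sub>R ((1/2) *\<^sub>R (y - bb))" by simp
  then show ?thesis unfolding Eset_eq[OF L] using z by blast
qed

definition P8 :: "(real^8) set" where "P8 = {vec8 1 (-1) 2 0 0 0 0 0, vec8 1 (-1) (-2) 0 0 0 0 0, vec8 1 (-1) 0 2 0 0 0 0, vec8 1 (-1) 0 (-2) 0 0 0 0, vec8 1 (-1) 0 0 2 0 0 0, vec8 1 (-1) 0 0 (-2) 0 0 0, vec8 1 (-1) 0 0 0 2 0 0, vec8 1 (-1) 0 0 0 (-2) 0 0, vec8 1 (-1) 0 0 0 0 2 0, vec8 1 (-1) 0 0 0 0 (-2) 0, vec8 1 (-1) 0 0 0 0 0 2, vec8 1 (-1) 0 0 0 0 0 (-2), vec8 0 0 1 1 1 1 1 1, vec8 0 0 1 1 1 1 (-1) (-1), vec8 0 0 1 1 1 (-1) 1 (-1), vec8 0 0 1 1 1 (-1) (-1) 1, vec8 0 0 1 1 (-1) 1 1 (-1), vec8 0 0 1 1 (-1) 1 (-1) 1, vec8 0 0 1 1 (-1) (-1) 1 1, vec8 0 0 1 1 (-1) (-1) (-1) (-1), vec8 0 0 1 (-1) 1 1 1 (-1), vec8 0 0 1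 (-1) 1 1 (-1) 1, vec8 0 0 1 (-1) 1 (-1) 1 1, vec8 0 0 1 (-1) 1 (-1) (-1) (-1), vec8 0 0 1 (-1) (-1) 1 1 1, vec8 0 0 1 (-1) (-1) 1 (-1) (-1), vec8 0 0 1 (-1) (-1) (-1) 1 (-1), vec8 0 0 1 (-1) (-1) (-1) (-1) 1}"

lemma card_P8: "card P8 = 28"
  by (simp add: P8_def vec8_eq_iff)

lemma P8_props: "\<forall>y\<in>P8. y \<bullet> y = 6 \<and> (y$0 = 1 \<or> (y$0 = 0 \<and> y$2 = 1))"
  by (simp add: P8_def vec8_inner)

lemma P8_R: "\<forall>y\<in>P8. (1/2) *\<^sub>R (y - bb) \<in> Rset E8_lat bb"
  by (simp add: P8_def bbv vec8_diff vec8_scale Rset_def E8_iff e_half_vec8 vec8_int vec8_vsum vec8_inner)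

lemma not_int_halves: "(1/2::real) \<notin> \<int>" "(3/2::real) \<notin> \<int>" "(5/2::real) \<notin> \<int>"
proof -
  have "(of_int m::real) \<noteq> of_int (2*n+1) / 2" for m n :: int
  proof
    assume "(of_int m::real) = of_int (2*n+1) / 2"
    then have "of_int (2*m) = (of_int (2*n+1)::real)" by simp
    then have "2*m = 2*n+1" by (simp only: of_int_eq_iff)
    then show False by presburger
  qed
  from this[of _ 0] this[of _ 1] this[of _ 2] show "(1/2::real) \<notin> \<int>" "(3/2::real) \<notin> \<int>" "(5/2::real) \<notin> \<int>"
    by (auto elim!: Ints_cases)
qed

lemma neg_Ints_iff: "(- (x::real) \<in> \<int>) = (x \<in> \<int>)"
  by (metis Ints_minus minus_minus)

lemma R_class:
  assumes z: "z \<in> Rset E8_lat bb"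
  shows "(\<exists>k c. k \<noteq> 0 \<and> k \<noteq> 1 \<and> (c = 1 \<or> c = -1) \<and>
            (z = (-1) *\<^sub>R axis 0 1 + c *\<^sub>R axis k 1 \<or> z = (-1) *\<^sub>R axis 1 1 + c *\<^sub>R axis k 1))
       \<or> (\<exists>c2 c3 c4 c5 c6 c7. (c2 = 1 \<or> c2 = -1) \<and> (c3 = 1 \<or> c3 = -1) \<and> (c4 = 1 \<or> c4 = -1) \<and>
            (c5 = 1 \<or> c5 = -1) \<and> (c6 = 1 \<or> c6 = -1) \<and> (c7 = 1 \<or> c7 = -1) \<and>
            z = vec8 (-1/2) (-1/2) (c2/2) (c3/2) (c4/2) (c5/2) (c6/2) (c7/2))"
proof -
  have z8: "z \<in> E8_lat" "z \<bullet> z = 2" "z \<bullet> bb = -1" using z by (auto simp: Rset_def)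
  from E8_root[OF z8(1,2)] show ?thesis
  proof
    assume a: "int_vec z \<and> (\<exists>i j s t. i \<noteq> j \<and> (s = 1 \<or> s = -1) \<and> (t = 1 \<or> t = -1) \<and> z = s *\<^sub>R axis i 1 + t *\<^sub>R axis j 1)"
    have bb1: "bb = 1 *\<^sub>R axis 0 1 + 1 *\<^sub>R axis 1 1" by (simp add: bb_def)
    have "z \<in> D_lat" using a z8(1) by (simp add: E8_iff D_lat_iff)
    then have "z \<in> Rset D_lat (1 *\<^sub>R axis 0 1 + 1 *\<^sub>R axis 1 1 :: real^8)"
      using z8 bb1 by (simp add: Rset_def)
    from D_Rset[OF _ _ _ this] have "\<exists>k c. k \<noteq> 0 \<and> k \<noteq> 1 \<and> (c = 1 \<or> c = -1) \<and>
            (z = (-1) *\<^sub>R axis 0 1 + c *\<^sub>R axis k 1 \<or> z = (-1) *\<^sub>R axis 1 1 + c *\<^sub>R axis k 1)"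
      by simp
    then show ?thesis ..
  next
    assume a: "int_vec (z - e_half) \<and> (\<forall>k. z$k = 1/2 \<or> z$k = -1/2)"
    have "z$0 + z$1 = -1" using z8(3) by (simp add: bb_inner)
    moreover have "z$0 = 1/2 \<or> z$0 = -1/2" "z$1 = 1/2 \<or> z$1 = -1/2" using a by auto
    ultimately have z01: "z$0 = -1/2 \<and> z$1 = -1/2" by auto
    have c: "2 * z$k = 1 \<or> 2 * z$k = -1" for k
    proof -
      have "z$k = 1/2 \<or> z$k = -1/2" using a by blast
      then show ?thesis by linarith
    qed
    have ze: "z = vec8 (-1/2) (-1/2) ((2*z$2)/2) ((2*z$3)/2) ((2*z$4)/2) ((2*z$5)/2) ((2*z$6)/2) ((2*z$7)/2)"
      using z01 vec8_eta[of z] by simp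
    show ?thesis
      apply (rule disjI2)
      apply (rule exI[of _ "2*z$2"], rule exI[of _ "2*z$3"], rule exI[of _ "2*z$4"], rule exI[of _ "2*z$5"],
             rule exI[of _ "2*z$6"], rule exI[of _ "2*z$7"])
      using c[of 2] c[of 3] c[of 4] c[of 5] c[of 6] c[of 7] ze by blast
  qed
qed

lemma k_cases: "(k::8) \<noteq> 0 \<Longrightarrow> k \<noteq> 1 \<Longrightarrow> k = 2 \<or> k = 3 \<or> k = 4 \<or> k = 5 \<or> k = 6 \<or> k = 7"
  using UNIV8 by (metis UNIV_I insertE empty_iff)

lemmas v8s = bbv axis8 vec8_add vec8_scale vec8_neg vec8_diff vec8_eq_iff vec8_vsum vec8_int vec8_inner e_half_vec8

lemma E8_EP: "y \<in> Eset E8_lat bb \<Longrightarrow> y \<in> P8 \<or> -y \<in> P8"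
proof -
  assume "y \<in> Eset E8_lat bb"
  then obtain z where z: "z \<in> Rset E8_lat bb" and y: "y = bb + 2 *\<^sub>R z"
    unfolding Eset_eq[OF evenlat_E8 bb_E8] by blast
  have zE: "vsum z / 2 \<in> \<int>" using z by (simp add: Rset_def E8_iff)
  from R_class[OF z] show ?thesis
  proof
    assume "\<exists>k c. k \<noteq> 0 \<and> k \<noteq> 1 \<and> (c = 1 \<or> c = -1) \<and>
            (z = (-1) *\<^sub>R axis 0 1 + c *\<^sub>R axis k 1 \<or> z = (-1) *\<^sub>R axis 1 1 + c *\<^sub>R axis k 1)"
    then obtain k c where k: "k \<noteq> 0" "k \<noteq> 1" and c: "c = 1 \<or> c = -1"
      and zf: "z = (-1) *\<^sub>R axis 0 1 + c *\<^sub>R axis k 1 \<or> z = (-1) *\<^sub>R axis 1 1 + c *\<^sub>R axis k 1" by blast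
    show ?thesis using k_cases[OF k] c zf unfolding y
      by (elim disjE) (simp_all add: v8s P8_def)
  next
    assume "\<exists>c2 c3 c4 c5 c6 c7. (c2 = 1 \<or> c2 = -1) \<and> (c3 = 1 \<or> c3 = -1) \<and> (c4 = 1 \<or> c4 = -1) \<and>
            (c5 = 1 \<or> c5 = -1) \<and> (c6 = 1 \<or> c6 = -1) \<and> (c7 = 1 \<or> c7 = -1) \<and>
            z = vec8 (-1/2) (-1/2) (c2/2) (c3/2) (c4/2) (c5/2) (c6/2) (c7/2)"
    then obtain c2 c3 c4 c5 c6 c7 where c: "(c2 = 1 \<or> c2 = -1)" "(c3 = 1 \<or> c3 = -1)" "(c4 = 1 \<or> c4 = -1)"
            "(c5 = 1 \<or> c5 = -1)" "(c6 = 1 \<or> c6 = -1)" "(c7 = 1 \<or> c7 = -1)"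
       and zf: "z = vec8 (-1/2) (-1/2) (c2/2) (c3/2) (c4/2) (c5/2) (c6/2) (c7/2)" by blast
    show ?thesis using c zE unfolding y zf
      by (elim disjE) (simp_all add: v8s P8_def not_int_halves neg_Ints_iff)
  qed
qed

lemma Qp_from:
  assumes L: "evenlat L" "bb \<in> L"
    and PR: "\<forall>y\<in>P. (1/2) *\<^sub>R (y - bb) \<in> Rset L bb"
    and EP: "\<forall>y\<in>Eset L bb. y \<in> P \<or> -y \<in> P"
    and fin: "finite P"
    and props: "\<forall>y\<in>P. y \<bullet> y = 6 \<and> (y$0 = 1 \<or> (y$0 = 0 \<and> y$2 = 1))"
    and PB: "P \<subseteq> span B" "B \<subseteq> span P" and indB: "independent B"
  shows "Qp L (card B) (card P) bb"
proof -
  have PE: "P \<subseteq> Eset L bb" using PR in_E_of[OF L bb_E8(2)] by blast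
  have EP': "Eset L bb \<subseteq> P \<union> uminus ` P"
  proof
    fix y assume "y \<in> Eset L bb"
    then have "y \<in> P \<or> -y \<in> P" using EP by blast
    then show "y \<in> P \<union> uminus ` P" by (metis UnI1 UnI2 image_eqI minus_minus)
  qed
  have "card (lines_of (Eset L bb)) = card P"
  proof (rule card_lines[OF PE EP' fin])
    show "\<forall>y\<in>P. y \<bullet> y = 6" using props by blast
    show "(6::real) \<noteq> 0" by simp
    show "\<forall>y\<in>P. \<forall>y'\<in>P. y' \<noteq> - y"
    proof (intro ballI notI)
      fix y y' assume a: "y \<in> P" "y' \<in> P" "y' = - y"
      then have "y'$0 = - y$0" "y'$2 = - y$2" by simp_all
      moreover have "y$0 = 1 \<or> (y$0 = 0 \<and> y$2 = 1)" "y'$0 = 1 \<or> (y'$0 = 0 \<and> y'$2 = 1)"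
        using props a(1,2) by blast+
      ultimately show False by auto
    qed
  qed
  moreover have "span P = span B" using PB by (simp add: span_eq)
  then have "span (Eset L bb) = span B" using span_eq_from[OF PE EP'] by simp
  then have "dim (span (Eset L bb)) = card B" using dim_span_eq_card_independent[OF indB] by simp
  ultimately show ?thesis by (simp add: Qp_def)
qed

definition B8 :: "(real^8) set" where
  "B8 = {vec8 1 (-1) 0 0 0 0 0 0, vec8 0 0 1 0 0 0 0 0, vec8 0 0 0 1 0 0 0 0, vec8 0 0 0 0 1 0 0 0,
         vec8 0 0 0 0 0 1 0 0, vec8 0 0 0 0 0 0 1 0, vec8 0 0 0 0 0 0 0 1}"

lemma card_B8: "card B8 = 7" by (simp add: B8_def vec8_eq_iff)

lemma indep_B8: "independent B8"
proof (rule pairwise_orthogonal_independent)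
  show "pairwise orthogonal B8" by (auto simp: B8_def pairwise_insert orthogonal_def vec8_inner)
  show "0 \<notin> B8" by (simp add: B8_def vec8_zero vec8_eq_iff)
qed

lemma W8: "x$0 + x$1 = 0 \<Longrightarrow> x \<in> span B8"
proof -
  assume a: "x$0 + x$1 = 0"
  have x1: "x$1 = - (x$0)" using a by simp
  have "x = vec8 (x$0) (-(x$0)) (x$2) (x$3) (x$4) (x$5) (x$6) (x$7)"
    by (simp add: vec_eq_iff all8 x1)
  also have "\<dots> = (x$0) *\<^sub>R vec8 1 (-1) 0 0 0 0 0 0 + (x$2) *\<^sub>R vec8 0 0 1 0 0 0 0 0 + (x$3) *\<^sub>R vec8 0 0 0 1 0 0 0 0
      + (x$4) *\<^sub>R vec8 0 0 0 0 1 0 0 0 + (x$5) *\<^sub>R vec8 0 0 0 0 0 1 0 0 + (x$6) *\<^sub>R vec8 0 0 0 0 0 0 1 0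
      + (x$7) *\<^sub>R vec8 0 0 0 0 0 0 0 1"
    by (simp add: vec8_scale vec8_add)
  also have "\<dots> \<in> span B8"
    by (intro span_add span_scale span_base) (simp_all add: B8_def)
  finally show ?thesis .
qed

lemma P8_span: "P8 \<subseteq> span B8"
proof
  fix y assume "y \<in> P8"
  then have "y$0 + y$1 = 0" by (auto simp: P8_def)
  then show "y \<in> span B8" by (rule W8)
qed

lemma span_sum2: "a \<in> S \<Longrightarrow> b \<in> S \<Longrightarrow> v = c *\<^sub>R (a + b) \<Longrightarrow> v \<in> span S"
  by (simp add: span_add span_scale span_base)
lemma span_diff2: "a \<in> S \<Longrightarrow> b \<in> S \<Longrightarrow> v = c *\<^sub>R (a - b) \<Longrightarrow> v \<in> span S"
  by (simp add: span_diff span_scale span_base)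

lemma B8_span: "B8 \<subseteq> span P8"
  unfolding B8_def
proof (intro insert_subsetI empty_subsetI)
  show "vec8 1 (-1) 0 0 0 0 0 0 \<in> span P8"
    by (rule span_sum2[of "vec8 1 (-1) 2 0 0 0 0 0" _ "vec8 1 (-1) (-2) 0 0 0 0 0" _ "1/2"]) (simp_all add: P8_def v8s)
  show "vec8 0 0 1 0 0 0 0 0 \<in> span P8"
    by (rule span_diff2[of "vec8 1 (-1) 2 0 0 0 0 0" _ "vec8 1 (-1) (-2) 0 0 0 0 0" _ "1/4"]) (simp_all add: P8_def v8s)
  show "vec8 0 0 0 1 0 0 0 0 \<in> span P8"
    by (rule span_diff2[of "vec8 1 (-1) 0 2 0 0 0 0" _ "vec8 1 (-1) 0 (-2) 0 0 0 0" _ "1/4"]) (simp_all add: P8_def v8s)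
  show "vec8 0 0 0 0 1 0 0 0 \<in> span P8"
    by (rule span_diff2[of "vec8 1 (-1) 0 0 2 0 0 0" _ "vec8 1 (-1) 0 0 (-2) 0 0 0" _ "1/4"]) (simp_all add: P8_def v8s)
  show "vec8 0 0 0 0 0 1 0 0 \<in> span P8"
    by (rule span_diff2[of "vec8 1 (-1) 0 0 0 2 0 0" _ "vec8 1 (-1) 0 0 0 (-2) 0 0" _ "1/4"]) (simp_all add: P8_def v8s)
  show "vec8 0 0 0 0 0 0 1 0 \<in> span P8"
    by (rule span_diff2[of "vec8 1 (-1) 0 0 0 0 2 0" _ "vec8 1 (-1) 0 0 0 0 (-2) 0" _ "1/4"]) (simp_all add: P8_def v8s)
  show "vec8 0 0 0 0 0 0 0 1 \<in> span P8"
    by (rule span_diff2[of "vec8 1 (-1) 0 0 0 0 0 2" _ "vec8 1 (-1) 0 0 0 0 0 (-2)" _ "1/4"]) (simp_all add: P8_def v8s)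
qed

lemma Qp_E8_base: "Qp E8_lat 7 28 bb"
proof -
  have EP: "\<forall>y\<in>Eset E8_lat bb. y \<in> P8 \<or> -y \<in> P8" using E8_EP by blast
  have fin: "finite P8" by (simp add: P8_def)
  have "Qp E8_lat (card B8) (card P8) bb"
    by (rule Qp_from[OF evenlat_E8 bb_E8(1) P8_R EP fin P8_props P8_span B8_span indep_B8])
  then show ?thesis by (simp add: card_B8 card_P8)
qed

definition P7 :: "(real^8) set" where "P7 = {vec8 1 (-1) 2 0 0 0 0 0, vec8 1 (-1) (-2) 0 0 0 0 0, vec8 1 (-1) 0 2 0 0 0 0, vec8 1 (-1) 0 (-2) 0 0 0 0, vec8 1 (-1) 0 0 2 0 0 0, vec8 1 (-1) 0 0 (-2) 0 0 0, vec8 1 (-1) 0 0 0 2 0 0, vec8 1 (-1) 0 0 0 (-2) 0 0, vec8 0 0 1 1 1 1 1 1, vec8 0 0 1 1 1 1 (-1) (-1), vec8 0 0 1 1 (-1) (-1) 1 1, vec8 0 0 1 1 (-1) (-1) (-1) (-1), vec8 0 0 1 (-1) 1 (-1) 1 1, vec8 0 0 1 (-1) 1 (-1) (-1) (-1), vec8 0 0 1 (-1) (-1) 1 1 1, vec8 0 0 1 (-1) (-1) 1 (-1) (-1)}"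

lemma card_P7: "card P7 = 16"
  by (simp add: P7_def vec8_eq_iff)

lemma P7_props: "\<forall>y\<in>P7. y \<bullet> y = 6 \<and> (y$0 = 1 \<or> (y$0 = 0 \<and> y$2 = 1))"
  by (simp add: P7_def vec8_inner)

lemma bb_E7_lat: "bb \<in> E7_lat"
  using bb_E8(1) by (simp add: E7_iff bbv)

lemma P7_R: "\<forall>y\<in>P7. (1/2) *\<^sub>R (y - bb) \<in> Rset E7_lat bb"
  by (simp add: P7_def bbv vec8_diff vec8_scale Rset_def E7_iff E8_iff e_half_vec8 vec8_int vec8_vsum vec8_inner)

lemma E7_lat_EP: "y \<in> Eset E7_lat bb \<Longrightarrow> y \<in> P7 \<or> -y \<in> P7"
proof -
  assume "y \<in> Eset E7_lat bb"
  then obtain z where z: "z \<in> Rset E7_lat bb" and y: "y = bb + 2 *\<^sub>R z"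
    unfolding Eset_eq[OF evenlat_E7 bb_E7_lat bb_E8(2)] by blast
  have zE: "vsum z / 2 \<in> \<int>" and zc: "z$6 = z$7" and z8: "z \<in> Rset E8_lat bb"
    using z by (auto simp: Rset_def E7_iff E8_iff)
  from R_class[OF z8] show ?thesis
  proof
    assume "\<exists>k c. k \<noteq> 0 \<and> k \<noteq> 1 \<and> (c = 1 \<or> c = -1) \<and>
            (z = (-1) *\<^sub>R axis 0 1 + c *\<^sub>R axis k 1 \<or> z = (-1) *\<^sub>R axis 1 1 + c *\<^sub>R axis k 1)"
    then obtain k c where k: "k \<noteq> 0" "k \<noteq> 1" and c: "c = 1 \<or> c = -1"
      and zf: "z = (-1) *\<^sub>R axis 0 1 + c *\<^sub>R axis k 1 \<or> z = (-1) *\<^sub>R axis 1 1 + c *\<^sub>R axis k 1" by blast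
    show ?thesis using k_cases[OF k] c zf zc unfolding y
      by (elim disjE) (simp_all add: v8s P7_def)
  next
    assume "\<exists>c2 c3 c4 c5 c6 c7. (c2 = 1 \<or> c2 = -1) \<and> (c3 = 1 \<or> c3 = -1) \<and> (c4 = 1 \<or> c4 = -1) \<and>
            (c5 = 1 \<or> c5 = -1) \<and> (c6 = 1 \<or> c6 = -1) \<and> (c7 = 1 \<or> c7 = -1) \<and>
            z = vec8 (-1/2) (-1/2) (c2/2) (c3/2) (c4/2) (c5/2) (c6/2) (c7/2)"
    then obtain c2 c3 c4 c5 c6 c7 where c: "(c2 = 1 \<or> c2 = -1)" "(c3 = 1 \<or> c3 = -1)" "(c4 = 1 \<or> c4 = -1)"
            "(c5 = 1 \<or> c5 = -1)" "(c6 = 1 \<or> c6 = -1)" "(c7 = 1 \<or> c7 = -1)"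
       and zf: "z = vec8 (-1/2) (-1/2) (c2/2) (c3/2) (c4/2) (c5/2) (c6/2) (c7/2)" by blast
    show ?thesis using c zE zc unfolding y zf
      by (elim disjE) (simp_all add: v8s P7_def not_int_halves neg_Ints_iff)
  qed
qed

definition B7 :: "(real^8) set" where
  "B7 = {vec8 1 (-1) 0 0 0 0 0 0, vec8 0 0 1 0 0 0 0 0, vec8 0 0 0 1 0 0 0 0, vec8 0 0 0 0 1 0 0 0, vec8 0 0 0 0 0 1 0 0, vec8 0 0 0 0 0 0 1 1}"

lemma card_B7: "card B7 = 6" by (simp add: B7_def vec8_eq_iff)

lemma indep_B7: "independent B7"
proof (rule pairwise_orthogonal_independent)
  show "pairwise orthogonal B7" by (auto simp: B7_def pairwise_insert orthogonal_def vec8_inner)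
  show "0 \<notin> B7" by (simp add: B7_def vec8_zero vec8_eq_iff)
qed

definition P6 :: "(real^8) set" where "P6 = {vec8 1 (-1) 2 0 0 0 0 0, vec8 1 (-1) (-2) 0 0 0 0 0, vec8 1 (-1) 0 2 0 0 0 0, vec8 1 (-1) 0 (-2) 0 0 0 0, vec8 1 (-1) 0 0 2 0 0 0, vec8 1 (-1) 0 0 (-2) 0 0 0, vec8 0 0 1 1 1 1 1 1, vec8 0 0 1 1 (-1) (-1) (-1) (-1), vec8 0 0 1 (-1) 1 (-1) (-1) (-1), vec8 0 0 1 (-1) (-1) 1 1 1}"

lemma card_P6: "card P6 = 10"
  by (simp add: P6_def vec8_eq_iff)

lemma P6_props: "\<forall>y\<in>P6. y \<bullet> y = 6 \<and> (y$0 = 1 \<or> (y$0 = 0 \<and> y$2 = 1))"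
  by (simp add: P6_def vec8_inner)

lemma bb_E6_lat: "bb \<in> E6_lat"
  using bb_E8(1) by (simp add: E6_iff bbv)

lemma P6_R: "\<forall>y\<in>P6. (1/2) *\<^sub>R (y - bb) \<in> Rset E6_lat bb"
  by (simp add: P6_def bbv vec8_diff vec8_scale Rset_def E6_iff E8_iff e_half_vec8 vec8_int vec8_vsum vec8_inner)

lemma E6_lat_EP: "y \<in> Eset E6_lat bb \<Longrightarrow> y \<in> P6 \<or> -y \<in> P6"
proof -
  assume "y \<in> Eset E6_lat bb"
  then obtain z where z: "z \<in> Rset E6_lat bb" and y: "y = bb + 2 *\<^sub>R z"
    unfolding Eset_eq[OF evenlat_E6 bb_E6_lat bb_E8(2)] by blast
  have zE: "vsum z / 2 \<in> \<int>" and zc: "z$6 = z$7 \<and> z$5 = z$6" and z8: "z \<in> Rset E8_lat bb"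
    using z by (auto simp: Rset_def E6_iff E8_iff)
  from R_class[OF z8] show ?thesis
  proof
    assume "\<exists>k c. k \<noteq> 0 \<and> k \<noteq> 1 \<and> (c = 1 \<or> c = -1) \<and>
            (z = (-1) *\<^sub>R axis 0 1 + c *\<^sub>R axis k 1 \<or> z = (-1) *\<^sub>R axis 1 1 + c *\<^sub>R axis k 1)"
    then obtain k c where k: "k \<noteq> 0" "k \<noteq> 1" and c: "c = 1 \<or> c = -1"
      and zf: "z = (-1) *\<^sub>R axis 0 1 + c *\<^sub>R axis k 1 \<or> z = (-1) *\<^sub>R axis 1 1 + c *\<^sub>R axis k 1" by blast
    show ?thesis using k_cases[OF k] c zf zc unfolding y
      by (elim disjE) (simp_all add: v8s P6_def)
  next
    assume "\<exists>c2 c3 c4 c5 c6 c7. (c2 = 1 \<or> c2 = -1) \<and> (c3 = 1 \<or> c3 = -1) \<and> (c4 = 1 \<or> c4 = -1) \<and>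
            (c5 = 1 \<or> c5 = -1) \<and> (c6 = 1 \<or> c6 = -1) \<and> (c7 = 1 \<or> c7 = -1) \<and>
            z = vec8 (-1/2) (-1/2) (c2/2) (c3/2) (c4/2) (c5/2) (c6/2) (c7/2)"
    then obtain c2 c3 c4 c5 c6 c7 where c: "(c2 = 1 \<or> c2 = -1)" "(c3 = 1 \<or> c3 = -1)" "(c4 = 1 \<or> c4 = -1)"
            "(c5 = 1 \<or> c5 = -1)" "(c6 = 1 \<or> c6 = -1)" "(c7 = 1 \<or> c7 = -1)"
       and zf: "z = vec8 (-1/2) (-1/2) (c2/2) (c3/2) (c4/2) (c5/2) (c6/2) (c7/2)" by blast
    show ?thesis using c zE zc unfolding y zf
      by (elim disjE) (simp_all add: v8s P6_def not_int_halves neg_Ints_iff)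
  qed
qed

definition B6 :: "(real^8) set" where
  "B6 = {vec8 1 (-1) 0 0 0 0 0 0, vec8 0 0 1 0 0 0 0 0, vec8 0 0 0 1 0 0 0 0, vec8 0 0 0 0 1 0 0 0, vec8 0 0 0 0 0 1 1 1}"

lemma card_B6: "card B6 = 5" by (simp add: B6_def vec8_eq_iff)

lemma indep_B6: "independent B6"
proof (rule pairwise_orthogonal_independent)
  show "pairwise orthogonal B6" by (auto simp: B6_def pairwise_insert orthogonal_def vec8_inner)
  show "0 \<notin> B6" by (simp add: B6_def vec8_zero vec8_eq_iff)
qed

lemma W7: "x$0 + x$1 = 0 \<Longrightarrow> x$6 = x$7 \<Longrightarrow> x \<in> span B7"
proof -
  assume a: "x$0 + x$1 = 0" "x$6 = x$7"
  have x1: "x$1 = - (x$0)" using a by simp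
  have "x = vec8 (x$0) (-(x$0)) (x$2) (x$3) (x$4) (x$5) (x$6) (x$6)"
    by (simp add: vec_eq_iff all8 x1 a(2))
  also have "\<dots> = (x$0) *\<^sub>R vec8 1 (-1) 0 0 0 0 0 0 + (x$2) *\<^sub>R vec8 0 0 1 0 0 0 0 0 + (x$3) *\<^sub>R vec8 0 0 0 1 0 0 0 0
      + (x$4) *\<^sub>R vec8 0 0 0 0 1 0 0 0 + (x$5) *\<^sub>R vec8 0 0 0 0 0 1 0 0 + (x$6) *\<^sub>R vec8 0 0 0 0 0 0 1 1"
    by (simp add: vec8_scale vec8_add)
  also have "\<dots> \<in> span B7"
    by (intro span_add span_scale span_base) (simp_all add: B7_def)
  finally show ?thesis .
qed

lemma P7_span: "P7 \<subseteq> span B7"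
proof
  fix y assume "y \<in> P7"
  then have "y$0 + y$1 = 0" "y$6 = y$7" by (auto simp: P7_def)
  then show "y \<in> span B7" by (rule W7)
qed

lemma B7_span: "B7 \<subseteq> span P7"
proof -
  have e0: "vec8 1 (-1) 0 0 0 0 0 0 \<in> span P7"
    by (rule span_sum2[of "vec8 1 (-1) 2 0 0 0 0 0" _ "vec8 1 (-1) (-2) 0 0 0 0 0" _ "1/2"]) (simp_all add: P7_def v8s)
  have e2: "vec8 0 0 1 0 0 0 0 0 \<in> span P7"
    by (rule span_diff2[of "vec8 1 (-1) 2 0 0 0 0 0" _ "vec8 1 (-1) (-2) 0 0 0 0 0" _ "1/4"]) (simp_all add: P7_def v8s)
  have e3: "vec8 0 0 0 1 0 0 0 0 \<in> span P7"
    by (rule span_diff2[of "vec8 1 (-1) 0 2 0 0 0 0" _ "vec8 1 (-1) 0 (-2) 0 0 0 0" _ "1/4"]) (simp_all add: P7_def v8s)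
  have e4: "vec8 0 0 0 0 1 0 0 0 \<in> span P7"
    by (rule span_diff2[of "vec8 1 (-1) 0 0 2 0 0 0" _ "vec8 1 (-1) 0 0 (-2) 0 0 0" _ "1/4"]) (simp_all add: P7_def v8s)
  have e5: "vec8 0 0 0 0 0 1 0 0 \<in> span P7"
    by (rule span_diff2[of "vec8 1 (-1) 0 0 0 2 0 0" _ "vec8 1 (-1) 0 0 0 (-2) 0 0" _ "1/4"]) (simp_all add: P7_def v8s)
  have y: "vec8 0 0 1 1 1 1 1 1 \<in> span P7" by (rule span_base) (simp add: P7_def vec8_eq_iff)
  have "vec8 0 0 0 0 0 0 1 1 = vec8 0 0 1 1 1 1 1 1 - (vec8 0 0 1 0 0 0 0 0 + vec8 0 0 0 1 0 0 0 0 + vec8 0 0 0 0 1 0 0 0 + vec8 0 0 0 0 0 1 0 0)"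
    by (simp add: v8s)
  then have e67: "vec8 0 0 0 0 0 0 1 1 \<in> span P7" using y e2 e3 e4 e5 by (simp add: span_diff span_add)
  show ?thesis unfolding B7_def using e0 e2 e3 e4 e5 e67 by simp
qed

lemma Qp_E7_base: "Qp E7_lat 6 16 bb"
proof -
  have EP: "\<forall>y\<in>Eset E7_lat bb. y \<in> P7 \<or> -y \<in> P7" using E7_lat_EP by blast
  have fin: "finite P7" by (simp add: P7_def)
  have "Qp E7_lat (card B7) (card P7) bb"
    by (rule Qp_from[OF evenlat_E7 bb_E7_lat P7_R EP fin P7_props P7_span B7_span indep_B7])
  then show ?thesis by (simp add: card_B7 card_P7)
qed

lemma W6: "x$0 + x$1 = 0 \<Longrightarrow> x$6 = x$7 \<Longrightarrow> x$5 = x$6 \<Longrightarrow> x \<in> span B6"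
proof -
  assume a: "x$0 + x$1 = 0" "x$6 = x$7" "x$5 = x$6"
  have x1: "x$1 = - (x$0)" using a by simp
  have "x = vec8 (x$0) (-(x$0)) (x$2) (x$3) (x$4) (x$5) (x$5) (x$5)"
    by (simp add: vec_eq_iff all8 x1 a(2,3))
  also have "\<dots> = (x$0) *\<^sub>R vec8 1 (-1) 0 0 0 0 0 0 + (x$2) *\<^sub>R vec8 0 0 1 0 0 0 0 0 + (x$3) *\<^sub>R vec8 0 0 0 1 0 0 0 0
      + (x$4) *\<^sub>R vec8 0 0 0 0 1 0 0 0 + (x$5) *\<^sub>R vec8 0 0 0 0 0 1 1 1"
    by (simp add: vec8_scale vec8_add)
  also have "\<dots> \<in> span B6"
    by (intro span_add span_scale span_base) (simp_all add: B6_def)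
  finally show ?thesis .
qed

lemma P6_span: "P6 \<subseteq> span B6"
proof
  fix y assume "y \<in> P6"
  then have "y$0 + y$1 = 0" "y$6 = y$7" "y$5 = y$6" by (auto simp: P6_def)
  then show "y \<in> span B6" by (rule W6)
qed

lemma B6_span: "B6 \<subseteq> span P6"
proof -
  have e0: "vec8 1 (-1) 0 0 0 0 0 0 \<in> span P6"
    by (rule span_sum2[of "vec8 1 (-1) 2 0 0 0 0 0" _ "vec8 1 (-1) (-2) 0 0 0 0 0" _ "1/2"]) (simp_all add: P6_def v8s)
  have e2: "vec8 0 0 1 0 0 0 0 0 \<in> span P6"
    by (rule span_diff2[of "vec8 1 (-1) 2 0 0 0 0 0" _ "vec8 1 (-1) (-2) 0 0 0 0 0" _ "1/4"]) (simp_all add: P6_def v8s)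
  have e3: "vec8 0 0 0 1 0 0 0 0 \<in> span P6"
    by (rule span_diff2[of "vec8 1 (-1) 0 2 0 0 0 0" _ "vec8 1 (-1) 0 (-2) 0 0 0 0" _ "1/4"]) (simp_all add: P6_def v8s)
  have e4: "vec8 0 0 0 0 1 0 0 0 \<in> span P6"
    by (rule span_diff2[of "vec8 1 (-1) 0 0 2 0 0 0" _ "vec8 1 (-1) 0 0 (-2) 0 0 0" _ "1/4"]) (simp_all add: P6_def v8s)
  have y: "vec8 0 0 1 1 1 1 1 1 \<in> span P6" by (rule span_base) (simp add: P6_def vec8_eq_iff)
  have "vec8 0 0 0 0 0 1 1 1 = vec8 0 0 1 1 1 1 1 1 - (vec8 0 0 1 0 0 0 0 0 + vec8 0 0 0 1 0 0 0 0 + vec8 0 0 0 0 1 0 0 0)"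
    by (simp add: v8s)
  then have e567: "vec8 0 0 0 0 0 1 1 1 \<in> span P6" using y e2 e3 e4 by (simp add: span_diff span_add)
  show ?thesis unfolding B6_def using e0 e2 e3 e4 e567 by simp
qed

lemma Qp_E6_base: "Qp E6_lat 5 10 bb"
proof -
  have EP: "\<forall>y\<in>Eset E6_lat bb. y \<in> P6 \<or> -y \<in> P6" using E6_lat_EP by blast
  have fin: "finite P6" by (simp add: P6_def)
  have "Qp E6_lat (card B6) (card P6) bb"
    by (rule Qp_from[OF evenlat_E6 bb_E6_lat P6_R EP fin P6_props P6_span B6_span indep_B6])
  then show ?thesis by (simp add: card_B6 card_P6)
qed

lemma E_main:
  assumes L: "L = E8_lat \<or> L = E7_lat \<or> L = E6_lat" and ev: "evenlat L" and bL: "bb \<in> L"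
    and Qb: "Qp L d t bb"
  shows "prop_holds L d t"
  unfolding prop_holds_def
proof (intro ballI impI)
  fix x0 assume x0: "x0 \<in> L" "Nrm x0 = 2"
  have x0n: "x0 \<bullet> x0 = 2" using x0 by (simp add: Nrm_def)
  have "Qp L d t x0"
    by (rule Qp_transfer[OF ev bL bb_E8(2) Qb x0(1) x0n]) (rule E_wit[OF L x0(1) x0n])
  moreover have "\<forall>y\<in>Eset L x0. \<forall>y'\<in>Eset L x0. span {y} \<noteq> span {y'} \<longrightarrow> \<bar>y \<bullet> y'\<bar> = 1 / 3 * (norm y * norm y')"
    by (rule angle_prop[OF ev x0(1) x0n])
  ultimately show "dim (span (Eset L x0)) = d \<and> card (lines_of (Eset L x0)) = t \<and>
    (\<forall>y\<in>Eset L x0. \<forall>y'\<in>Eset L x0. span {y} \<noteq> span {y'} \<longrightarrow> \<bar>y \<bullet> y'\<bar> = 1 / 3 * (norm y * norm y'))"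
    by (simp add: Qp_def)
qed

theorem proposition2p1:
  shows "(CARD('a::finite) \<ge> 2 \<longrightarrow>
            (let n = CARD('a) - 1; r = n - 1 in prop_holds (A_lat :: (real^'a) set) r r))
       \<and> (CARD('b::finite) \<ge> 4 \<longrightarrow>
            (let n = CARD('b); r = n - 1 in prop_holds (D_lat :: (real^'b) set) r (2 * r - 2)))
       \<and> prop_holds E8_lat 7 28
       \<and> prop_holds E7_lat 6 16
       \<and> prop_holds E6_lat 5 10"
proof (intro conjI)
  show "(CARD('a::finite) \<ge> 2 \<longrightarrow>
            (let n = CARD('a) - 1; r = n - 1 in prop_holds (A_lat :: (real^'a) set) r r))"
    using AD_part[where 'a='a and 'b='b] by blast
  show "(CARD('b::finite) \<ge> 4 \<longrightarrow>
            (let n = CARD('b); r = n - 1 in prop_holds (D_lat :: (real^'b) set) r (2 * r - 2)))"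
    using AD_part[where 'a='a and 'b='b] by blast
  show "prop_holds E8_lat 7 28" by (rule E_main[OF _ evenlat_E8 bb_E8(1) Qp_E8_base]) simp
  show "prop_holds E7_lat 6 16" by (rule E_main[OF _ evenlat_E7 bb_E7_lat Qp_E7_base]) simp
  show "prop_holds E6_lat 5 10" by (rule E_main[OF _ evenlat_E6 bb_E6_lat Qp_E6_base]) simp
qed

end
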